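(* Let $k$ be a field with $\operatorname{char}(k)\nmid(d+1)!$, $V$ an $n$-dimensional $k$-vector space, $S=\operatorname{Sym}V$. Let $f\in S_{d+1}$ satisfy $\dim_k\langle\nabla f\rangle=n$. Then $f$ is a direct sum if and only if $\nabla f\in\operatorname{Grass}(n,S_d)$ is a direct sum if and only if $\nabla f\in\operatorname{Grass}(n,S_d)$ is a balanced direct sum.
   Context: For $f\in S_{d+1}$ and a basis $x_1,\dots,x_n$ of $V$, $\langle\nabla f\rangle$ is the $k$-span of $\partial f/\partial x_1,\dots,\partial f/\partial x_n$ in $S_d$, and when this has dimension $n$, $\nabla f$ is the corresponding point of $\operatorname{Grass}(n,S_d)$. A form $f$ is a direct sum if there is a decomposition $V=U\oplus W$ and nonzero $f_1\in\operatorname{Sym}^{d+1}U$, $f_2\in\operatorname{Sym}^{d+1}W$ with $f=f_1+f_2$. An $m$-dimensional subspace $L\subset\operatorname{Sym}^dV$ is a direct sum if there is a non-trivial decomposition $V=U\oplus W$ and subspaces $L_1\subset\operatorname{Sym}^dU$, $L_2\subset\operatorname{Sym}^dW$ of dimensions $m_1+m_2=m$ with $L=L_1+L_2$; it is a balanced direct sum if moreover $m_1=\dim_kU$, $m_2=\dim_kW$. *)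

theory Defs
  imports Main HOL.Vector_Spaces "HOL-Library.Poly_Mapping"
begin

text \<open>Polynomials in the variables indexed by the finite type 'n (a basis x_i of V)
  with coefficients in 'k: S = Sym V = k[x_i].  Monomials are exponent vectors.\<close>

type_synonym ('n, 'k) mpoly = "('n \<Rightarrow>\<^sub>0 nat) \<Rightarrow>\<^sub>0 'k"

definition psmult :: "'k::field \<Rightarrow> ('n, 'k) mpoly \<Rightarrow> ('n, 'k) mpoly" where
  "psmult c p = Poly_Mapping.map (\<lambda>x. c * x) p"

abbreviation pspan :: "('n, 'k::field) mpoly set \<Rightarrow> ('n, 'k) mpoly set" where
  "pspan \<equiv> module.span psmult"

abbreviation psubspace :: "('n, 'k::field) mpoly set \<Rightarrow> bool" where
  "psubspace \<equiv> module.subspace psmult"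

abbreviation pdim :: "('n, 'k::field) mpoly set \<Rightarrow> nat" where
  "pdim \<equiv> vector_space.dim psmult"

definition mono_deg :: "('n \<Rightarrow>\<^sub>0 nat) \<Rightarrow> nat" where
  "mono_deg a = (\<Sum>i\<in>Poly_Mapping.keys a. Poly_Mapping.lookup a i)"

definition Sdeg :: "nat \<Rightarrow> ('n, 'k::field) mpoly set" where
  "Sdeg m = {p. \<forall>a\<in>Poly_Mapping.keys p. mono_deg a = m}"

definition pd :: "'n \<Rightarrow> ('n, 'k::field) mpoly \<Rightarrow> ('n, 'k) mpoly" where
  "pd i p = (\<Sum>a\<in>Poly_Mapping.keys p. Poly_Mapping.single (a - Poly_Mapping.single i 1)
                              (of_nat (Poly_Mapping.lookup a i) * Poly_Mapping.lookup p a))"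

definition grad_span :: "('n, 'k::field) mpoly \<Rightarrow> ('n, 'k) mpoly set" where
  "grad_span f = pspan (range (\<lambda>i. pd i f))"

text \<open>Sym^m U for a subspace U of V = S_1 (as a subspace of S_m).\<close>
definition symp :: "('n, 'k::field) mpoly set \<Rightarrow> nat \<Rightarrow> ('n, 'k) mpoly set" where
  "symp U m = pspan {prod_list ls | ls. length ls = m \<and> set ls \<subseteq> U}"

definition setsum :: "('n, 'k::field) mpoly set \<Rightarrow> ('n, 'k) mpoly set \<Rightarrow> ('n, 'k) mpoly set" where
  "setsum A B = {a + b | a b. a \<in> A \<and> b \<in> B}"

text \<open>V = U \<oplus> W, where V = S_1 is the space of linear forms.\<close>
definition vdecomp :: "('n, 'k::field) mpoly set \<Rightarrow> ('n, 'k) mpoly set \<Rightarrow> bool" where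
  "vdecomp U W \<longleftrightarrow> psubspace U \<and> psubspace W \<and> U \<subseteq> Sdeg 1 \<and> W \<subseteq> Sdeg 1 \<and>
     U \<inter> W = {0} \<and> setsum U W = Sdeg 1"

definition form_direct_sum :: "nat \<Rightarrow> ('n, 'k::field) mpoly \<Rightarrow> bool" where
  "form_direct_sum d f \<longleftrightarrow> (\<exists>U W f1 f2. vdecomp U W \<and>
      f1 \<in> symp U (d+1) \<and> f2 \<in> symp W (d+1) \<and> f1 \<noteq> 0 \<and> f2 \<noteq> 0 \<and> f = f1 + f2)"

definition subsp_direct_sum :: "nat \<Rightarrow> ('n, 'k::field) mpoly set \<Rightarrow> bool" where
  "subsp_direct_sum d L \<longleftrightarrow> (\<exists>U W L1 L2. vdecomp U W \<and> U \<noteq> {0} \<and> W \<noteq> {0} \<and>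
      psubspace L1 \<and> psubspace L2 \<and> L1 \<subseteq> symp U d \<and> L2 \<subseteq> symp W d \<and>
      pdim L1 + pdim L2 = pdim L \<and> L = setsum L1 L2)"

definition subsp_balanced_direct_sum :: "nat \<Rightarrow> ('n, 'k::field) mpoly set \<Rightarrow> bool" where
  "subsp_balanced_direct_sum d L \<longleftrightarrow> (\<exists>U W L1 L2. vdecomp U W \<and> U \<noteq> {0} \<and> W \<noteq> {0} \<and>
      psubspace L1 \<and> psubspace L2 \<and> L1 \<subseteq> symp U d \<and> L2 \<subseteq> symp W d \<and>
      pdim L1 + pdim L2 = pdim L \<and> L = setsum L1 L2 \<and>
      pdim L1 = pdim U \<and> pdim L2 = pdim W)"

end

theory Submission
  imports Defs
begin

lemma psmult_conv: "psmult c p = Poly_Mapping.single 0 c * p"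
  unfolding psmult_def by (rule mult_map_scale_conv_mult)

interpretation pv: vector_space "psmult :: 'k::field \<Rightarrow> ('n, 'k) mpoly \<Rightarrow> ('n, 'k) mpoly"
proof
  fix a b :: 'k and x y :: "('n, 'k) mpoly"
  show "psmult a (x + y) = psmult a x + psmult a y" by (simp add: psmult_conv distrib_left)
  show "psmult (a + b) x = psmult a x + psmult b x" by (simp add: psmult_conv single_add distrib_right)
  show "psmult a (psmult b x) = psmult (a * b) x" by (simp add: psmult_conv mult_single flip: mult.assoc)
  show "psmult 1 x = x" by (simp add: psmult_conv)
qed


definition ev :: "'n \<Rightarrow> ('n \<Rightarrow>\<^sub>0 nat)" where "ev i = Poly_Mapping.single i 1"
definition Xv :: "'n \<Rightarrow> ('n, 'k::field) mpoly" where "Xv i = Poly_Mapping.single (ev i) 1"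
definition cf :: "('n, 'k::field) mpoly \<Rightarrow> 'n \<Rightarrow> 'k" where "cf m i = Poly_Mapping.lookup m (ev i)"

lemma lookup_ev: "Poly_Mapping.lookup (ev i) j = (if i = j then 1 else 0)"
  by (simp add: ev_def lookup_single)

lemma lookup_minus_nat: "Poly_Mapping.lookup (a - b) k = Poly_Mapping.lookup a k - Poly_Mapping.lookup (b :: 'n \<Rightarrow>\<^sub>0 nat) k"
  by (simp add: minus_poly_mapping.rep_eq)

lemma lookup_psmult: "Poly_Mapping.lookup (psmult c p) a = c * Poly_Mapping.lookup p a"
  by (simp add: psmult_def map.rep_eq when_def)

lemma ev_cancel: "Poly_Mapping.lookup a i \<noteq> 0 \<Longrightarrow> (a - ev i) + ev i = a"
  by (rule poly_mapping_eqI) (auto simp: lookup_add lookup_minus_nat lookup_ev)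

lemma ev_cancel2: "(b + ev i) - ev i = b"
  by (rule poly_mapping_eqI) (auto simp: lookup_add lookup_minus_nat lookup_ev)

lemma lookup_pd: "Poly_Mapping.lookup (pd i p) b = of_nat (Poly_Mapping.lookup b i + 1) * Poly_Mapping.lookup p (b + ev i)"
proof -
  have "Poly_Mapping.lookup (pd i p) b = (\<Sum>a\<in>Poly_Mapping.keys p. (of_nat (Poly_Mapping.lookup a i) * Poly_Mapping.lookup p a when a - ev i = b))"
    by (simp add: pd_def lookup_sum lookup_single ev_def)
  also have "\<dots> = (\<Sum>a\<in>Poly_Mapping.keys p. if a = b + ev i then of_nat (Poly_Mapping.lookup b i + 1) * Poly_Mapping.lookup p (b + ev i) else 0)"
  proof (rule sum.cong)
    fix a assume "a \<in> Poly_Mapping.keys p"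
    show "(of_nat (Poly_Mapping.lookup a i) * Poly_Mapping.lookup p a when a - ev i = b) =
      (if a = b + ev i then of_nat (Poly_Mapping.lookup b i + 1) * Poly_Mapping.lookup p (b + ev i) else 0)"
    proof (cases "a = b + ev i")
      case True then show ?thesis by (simp add: ev_cancel2 lookup_add lookup_ev)
    next
      case False
      show ?thesis
      proof (cases "Poly_Mapping.lookup a i = 0")
        case True with False show ?thesis by simp
      next
        case nz: False
        have "a - ev i \<noteq> b" using False ev_cancel[OF nz] by metis
        with False show ?thesis by simp
      qed
    qed
  qed simp
  also have "\<dots> = of_nat (Poly_Mapping.lookup b i + 1) * Poly_Mapping.lookup p (b + ev i)"
    by (auto simp: sum.delta in_keys_iff)
  finally show ?thesis .
qed

lemma pd_add: "pd i (p + q) = pd i p + pd i q"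
  by (rule poly_mapping_eqI) (simp add: lookup_pd lookup_add distrib_left)

lemma pd_psmult: "pd i (psmult c p) = psmult c (pd i p)"
  by (rule poly_mapping_eqI) (simp add: lookup_pd lookup_psmult)

lemma pd_zero[simp]: "pd i 0 = 0"
  by (rule poly_mapping_eqI) (simp add: lookup_pd)

lemma pd_uminus: "pd i (- p) = - pd i p"
  by (rule poly_mapping_eqI) (simp add: lookup_pd)

lemma pd_diff: "pd i (p - q) = pd i p - pd i q"
  by (rule poly_mapping_eqI) (simp add: lookup_pd lookup_minus algebra_simps)

lemma pd_sum: "pd i (sum g A) = (\<Sum>a\<in>A. pd i (g a))"
  by (induction A rule: infinite_finite_induct) (simp_all add: pd_add)

lemma pd_single: "pd i (Poly_Mapping.single a c) = Poly_Mapping.single (a - ev i) (of_nat (Poly_Mapping.lookup a i) * c)"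
proof (rule poly_mapping_eqI)
  fix b
  show "Poly_Mapping.lookup (pd i (Poly_Mapping.single a c)) b = Poly_Mapping.lookup (Poly_Mapping.single (a - ev i) (of_nat (Poly_Mapping.lookup a i) * c)) b"
  proof (cases "a = b + ev i")
    case True then show ?thesis by (simp add: lookup_pd ev_cancel2 lookup_add lookup_ev)
  next
    case False
    have "Poly_Mapping.lookup (Poly_Mapping.single (a - ev i) (of_nat (Poly_Mapping.lookup a i) * c)) b = 0"
    proof (cases "Poly_Mapping.lookup a i = 0")
      case True then show ?thesis by simp
    next
      case nz: False
      have "a - ev i \<noteq> b" using False ev_cancel[OF nz] by metis
      then show ?thesis by (simp add: lookup_single)
    qed
    with False show ?thesis by (simp add: lookup_pd lookup_single)
  qed
qed

lemma poly_sum_monos: "p = (\<Sum>a\<in>Poly_Mapping.keys p. Poly_Mapping.single a (Poly_Mapping.lookup p a))"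
  by (rule poly_mapping_eqI) (simp add: lookup_sum lookup_single when_def sum.delta in_keys_iff)

lemma single_shift: "Poly_Mapping.single (a - ev i + b) (of_nat (Poly_Mapping.lookup a i) * x) =
   Poly_Mapping.single (a + b - ev i) (of_nat (Poly_Mapping.lookup a i) * (x :: 'k::field))"
proof (cases "Poly_Mapping.lookup a i = 0")
  case False
  have "a - ev i + b = a + b - ev i"
    by (rule poly_mapping_eqI) (use False in \<open>auto simp: lookup_add lookup_minus_nat lookup_ev\<close>)
  then show ?thesis by simp
qed simp

lemma pd_mult_single: "pd i (Poly_Mapping.single a c * Poly_Mapping.single b e) =
  pd i (Poly_Mapping.single a c) * Poly_Mapping.single b e + Poly_Mapping.single a c * pd i (Poly_Mapping.single b (e :: 'k::field))"
proof -
  have 1: "Poly_Mapping.single (a - ev i + b) (of_nat (Poly_Mapping.lookup a i) * (c * e)) =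
   Poly_Mapping.single (a + b - ev i) (of_nat (Poly_Mapping.lookup a i) * (c * e))" by (rule single_shift)
  have 2: "Poly_Mapping.single (b - ev i + a) (of_nat (Poly_Mapping.lookup b i) * (c * e)) =
   Poly_Mapping.single (b + a - ev i) (of_nat (Poly_Mapping.lookup b i) * (c * e))" by (rule single_shift)
  show ?thesis
    using 1 2 by (simp add: mult_single pd_single lookup_add algebra_simps single_add)
qed

lemma pd_mult: "pd i (p * q) = pd i p * q + p * pd i (q :: ('n, 'k::field) mpoly)"
proof -
  have "pd i (p * q) = pd i ((\<Sum>a\<in>Poly_Mapping.keys p. Poly_Mapping.single a (Poly_Mapping.lookup p a)) * (\<Sum>b\<in>Poly_Mapping.keys q. Poly_Mapping.single b (Poly_Mapping.lookup q b)))"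
    by (simp flip: poly_sum_monos)
  also have "\<dots> = (\<Sum>a\<in>Poly_Mapping.keys p. \<Sum>b\<in>Poly_Mapping.keys q. pd i (Poly_Mapping.single a (Poly_Mapping.lookup p a) * Poly_Mapping.single b (Poly_Mapping.lookup q b)))"
    by (simp add: sum_distrib_left sum_distrib_right pd_sum) (rule sum.swap)
  also have "\<dots> = (\<Sum>a\<in>Poly_Mapping.keys p. \<Sum>b\<in>Poly_Mapping.keys q. pd i (Poly_Mapping.single a (Poly_Mapping.lookup p a)) * Poly_Mapping.single b (Poly_Mapping.lookup q b)
      + Poly_Mapping.single a (Poly_Mapping.lookup p a) * pd i (Poly_Mapping.single b (Poly_Mapping.lookup q b)))"
    by (simp add: pd_mult_single)
  also have "\<dots> = pd i ((\<Sum>a\<in>Poly_Mapping.keys p. Poly_Mapping.single a (Poly_Mapping.lookup p a))) * (\<Sum>b\<in>Poly_Mapping.keys q. Poly_Mapping.single b (Poly_Mapping.lookup q b))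
     + (\<Sum>a\<in>Poly_Mapping.keys p. Poly_Mapping.single a (Poly_Mapping.lookup p a)) * pd i (\<Sum>b\<in>Poly_Mapping.keys q. Poly_Mapping.single b (Poly_Mapping.lookup q b))"
    by (simp add: sum.distrib sum_distrib_left sum_distrib_right pd_sum) (rule arg_cong2[where f="(+)"]; rule sum.swap)
  finally show ?thesis by (simp flip: poly_sum_monos)
qed

lemma pd_const: "pd i (Poly_Mapping.single 0 c) = 0"
  by (simp add: pd_single)

lemma pd_Xv: "pd i (Xv j) = Poly_Mapping.single 0 (if i = j then 1 else 0)"
  by (auto simp: pd_single Xv_def lookup_ev)

lemma pd_comm: "pd i (pd j p) = pd j (pd i p)"
proof (rule poly_mapping_eqI)
  fix b
  have e: "b + ev i + ev j = b + ev j + ev i" by (simp add: add_ac)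
  show "Poly_Mapping.lookup (pd i (pd j p)) b = Poly_Mapping.lookup (pd j (pd i p)) b"
    by (cases "i = j") (simp_all add: lookup_pd lookup_add lookup_ev e algebra_simps)
qed


lemma mono_deg_univ: "mono_deg (a :: ('n::finite) \<Rightarrow>\<^sub>0 nat) = (\<Sum>i\<in>UNIV. Poly_Mapping.lookup a i)"
  unfolding mono_deg_def by (rule sum.mono_neutral_left) (auto simp: in_keys_iff)

lemma mono_deg_add: "mono_deg (a + b :: ('n::finite) \<Rightarrow>\<^sub>0 nat) = mono_deg a + mono_deg b"
  by (simp add: mono_deg_univ lookup_add sum.distrib)

lemma mono_deg_ev: "mono_deg (ev i :: ('n::finite) \<Rightarrow>\<^sub>0 nat) = 1"
  by (simp add: mono_deg_univ lookup_ev)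

lemma mono_deg_zero: "mono_deg (0 :: ('n::finite) \<Rightarrow>\<^sub>0 nat) = 0"
  by (simp add: mono_deg_univ)

lemma mono_deg_0_iff: "mono_deg (a :: ('n::finite) \<Rightarrow>\<^sub>0 nat) = 0 \<longleftrightarrow> a = 0"
  by (auto simp: mono_deg_univ poly_mapping_eq_iff fun_eq_iff)

lemma mono_deg_1: "mono_deg (a :: ('n::finite) \<Rightarrow>\<^sub>0 nat) = 1 \<Longrightarrow> \<exists>i. a = ev i"
proof -
  assume a: "mono_deg a = 1"
  then have "a \<noteq> 0" by (metis mono_deg_zero zero_neq_one)
  then obtain i where i: "Poly_Mapping.lookup a i \<noteq> 0" by (auto simp: poly_mapping_eq_iff fun_eq_iff)
  have "mono_deg a = mono_deg (a - ev i) + mono_deg (ev i)"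
    using ev_cancel[OF i] mono_deg_add by metis
  then have "mono_deg (a - ev i) = 0" using a mono_deg_ev[of i] by linarith
  then have "a - ev i = 0" by (simp add: mono_deg_0_iff)
  then have "a = ev i" using ev_cancel[OF i] by simp
  then show ?thesis by blast
qed

lemma Sdeg_subspace: "psubspace (Sdeg m :: ('n, 'k::field) mpoly set)"
proof (rule pv.subspaceI)
  show "0 \<in> Sdeg m" by (simp add: Sdeg_def)
next
  fix x y :: "('n, 'k) mpoly"
  assume "x \<in> Sdeg m" "y \<in> Sdeg m"
  then show "x + y \<in> Sdeg m"
    unfolding Sdeg_def mem_Collect_eq using keys_add[of x y] by blast
next
  fix c :: 'k and x :: "('n, 'k) mpoly"
  assume x: "x \<in> Sdeg m"
  have "Poly_Mapping.keys (psmult c x) \<subseteq> Poly_Mapping.keys x"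
    by (auto simp: in_keys_iff lookup_psmult)
  then show "psmult c x \<in> Sdeg m"
    using x unfolding Sdeg_def mem_Collect_eq by blast
qed

lemma Sdeg_mult: "p \<in> Sdeg a \<Longrightarrow> q \<in> Sdeg b \<Longrightarrow> p * q \<in> Sdeg (a + b :: nat)"
  for p q :: "('n::finite, 'k::field) mpoly"
  unfolding Sdeg_def using keys_mult[of p q] by (auto simp: mono_deg_add)

lemma Sdeg_pd: "p \<in> Sdeg m \<Longrightarrow> pd i p \<in> Sdeg (m - 1)"
  for p :: "('n::finite, 'k::field) mpoly"
  unfolding Sdeg_def
proof (intro CollectI ballI)
  fix b assume p: "p \<in> {p. \<forall>a\<in>Poly_Mapping.keys p. mono_deg a = m}" and b: "b \<in> Poly_Mapping.keys (pd i p)"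
  then have "b + ev i \<in> Poly_Mapping.keys p" by (auto simp: in_keys_iff lookup_pd)
  then have "mono_deg (b + ev i) = m" using p by auto
  then show "mono_deg b = m - 1" by (simp add: mono_deg_add mono_deg_ev)
qed

lemma Xv_Sdeg: "(Xv i :: ('n::finite, 'k::field) mpoly) \<in> Sdeg 1"
  by (simp add: Sdeg_def Xv_def mono_deg_ev)

lemma const_Sdeg: "(Poly_Mapping.single 0 c :: ('n::finite, 'k::field) mpoly) \<in> Sdeg 0"
  by (simp add: Sdeg_def mono_deg_zero)

lemma Sdeg0_const: "p \<in> Sdeg 0 \<Longrightarrow> p = Poly_Mapping.single 0 (Poly_Mapping.lookup p 0)"
  for p :: "('n::finite, 'k::field) mpoly"
  unfolding Sdeg_def
  by (rule poly_mapping_eqI) (auto simp: lookup_single when_def in_keys_iff mono_deg_0_iff)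

lemma lin_expand: "m \<in> Sdeg 1 \<Longrightarrow> m = (\<Sum>i\<in>UNIV. psmult (cf m i) (Xv i))"
  for m :: "('n::finite, 'k::field) mpoly"
proof (rule poly_mapping_eqI)
  fix b assume m: "m \<in> Sdeg 1"
  have inj: "ev i = ev j \<longleftrightarrow> i = j" for i j :: 'n
    by (metis lookup_ev zero_neq_one)
  show "Poly_Mapping.lookup m b = Poly_Mapping.lookup (\<Sum>i\<in>UNIV. psmult (cf m i) (Xv i)) b"
  proof (cases "\<exists>j. b = ev j")
    case True
    then obtain j where j: "b = ev j" by blast
    have "(\<Sum>i\<in>UNIV. cf m i * Poly_Mapping.lookup (Xv i) b) = (\<Sum>i\<in>UNIV. if i = j then cf m j else 0)"
      by (rule sum.cong) (auto simp: Xv_def lookup_single j inj)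
    then show ?thesis by (simp add: lookup_sum lookup_psmult j cf_def)
  next
    case False
    then have "b \<notin> Poly_Mapping.keys m" using m mono_deg_1 unfolding Sdeg_def by blast
    moreover have "(\<Sum>i\<in>UNIV. cf m i * Poly_Mapping.lookup (Xv i) b) = 0"
      by (rule sum.neutral) (use False in \<open>auto simp: Xv_def lookup_single\<close>)
    ultimately show ?thesis by (simp add: lookup_sum lookup_psmult in_keys_iff)
  qed
qed

lemma ev_add_iff: "ev i + a = b \<longleftrightarrow> (a = b - ev i \<and> Poly_Mapping.lookup b i \<noteq> 0)"
proof
  assume h: "ev i + a = b"
  then have "b - ev i = a" using ev_cancel2[of a i] by (simp add: add.commute)
  moreover have "Poly_Mapping.lookup b i \<noteq> 0" using h by (auto simp: lookup_add lookup_ev)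
  ultimately show "a = b - ev i \<and> Poly_Mapping.lookup b i \<noteq> 0" by simp
next
  assume "a = b - ev i \<and> Poly_Mapping.lookup b i \<noteq> 0"
  then show "ev i + a = b" using ev_cancel[of b i] by (simp add: add.commute)
qed

lemma lookup_Xv_mult: "Poly_Mapping.lookup (Xv i * q) b =
   (if Poly_Mapping.lookup b i \<noteq> 0 then Poly_Mapping.lookup q (b - ev i) else 0)"
  for q :: "('n, 'k::field) mpoly"
proof -
  have "Xv i * q = (\<Sum>a\<in>Poly_Mapping.keys q. Poly_Mapping.single (ev i + a) (Poly_Mapping.lookup q a))"
    by (subst poly_sum_monos[of q]) (simp add: sum_distrib_left Xv_def mult_single)
  then have "Poly_Mapping.lookup (Xv i * q) b = (\<Sum>a\<in>Poly_Mapping.keys q. if a = b - ev i \<and> Poly_Mapping.lookup b i \<noteq> 0 then Poly_Mapping.lookup q a else 0)"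
    by (simp add: lookup_sum lookup_single when_def ev_add_iff)
  also have "\<dots> = (if Poly_Mapping.lookup b i \<noteq> 0 then Poly_Mapping.lookup q (b - ev i) else 0)"
    by (auto simp: sum.delta in_keys_iff)
  finally show ?thesis .
qed

lemma euler_term: "(if Poly_Mapping.lookup b i \<noteq> 0 then Poly_Mapping.lookup (pd i p) (b - ev i) else 0)
   = of_nat (Poly_Mapping.lookup b i) * Poly_Mapping.lookup p b"
  for p :: "('n, 'k::field) mpoly"
proof (cases "Poly_Mapping.lookup b i = 0")
  case False
  have "Poly_Mapping.lookup (b - ev i) i + 1 = Poly_Mapping.lookup b i"
    using False by (simp add: lookup_minus_nat lookup_ev)
  then show ?thesis using False by (simp add: lookup_pd ev_cancel)
qed simp

lemma euler: "p \<in> Sdeg m \<Longrightarrow> (\<Sum>i\<in>UNIV. Xv i * pd i p) = psmult (of_nat m) p"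
  for p :: "('n::finite, 'k::field) mpoly"
proof (rule poly_mapping_eqI)
  fix b assume p: "p \<in> Sdeg m"
  have "Poly_Mapping.lookup (\<Sum>i\<in>UNIV. Xv i * pd i p) b = (\<Sum>i\<in>UNIV. of_nat (Poly_Mapping.lookup b i) * Poly_Mapping.lookup p b)"
    by (simp only: lookup_sum lookup_Xv_mult euler_term)
  also have "\<dots> = of_nat (mono_deg b) * Poly_Mapping.lookup p b"
    by (simp add: mono_deg_univ sum_distrib_right)
  also have "\<dots> = of_nat m * Poly_Mapping.lookup p b"
    using p unfolding Sdeg_def by (cases "b \<in> Poly_Mapping.keys p") (auto simp: in_keys_iff)
  finally show "Poly_Mapping.lookup (\<Sum>i\<in>UNIV. Xv i * pd i p) b = Poly_Mapping.lookup (psmult (of_nat m) p) b"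
    by (simp add: lookup_psmult)
qed

lemma all_pd_zero: "p \<in> Sdeg m \<Longrightarrow> (of_nat m :: 'k) \<noteq> 0 \<Longrightarrow> (\<And>i. pd i p = 0) \<Longrightarrow> p = 0"
  for p :: "('n::finite, 'k::field) mpoly"
  using euler[of p m] by simp


abbreviation plin :: "(('n, 'k::field) mpoly \<Rightarrow> ('n, 'k) mpoly) \<Rightarrow> bool" where
  "plin f \<equiv> module_hom psmult psmult f"

lemma plinI: "(\<And>x y. f (x + y) = f x + f y) \<Longrightarrow> (\<And>c x. f (psmult c x) = psmult c (f x)) \<Longrightarrow> plin f"
  by (simp add: module_hom_iff pv.module_axioms)

lemma plin_span_into: "plin f \<Longrightarrow> (\<And>s. s \<in> S \<Longrightarrow> f s \<in> T) \<Longrightarrow> psubspace T \<Longrightarrow> x \<in> pspan S \<Longrightarrow> f x \<in> T"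
proof -
  assume f: "plin f" and S: "\<And>s. s \<in> S \<Longrightarrow> f s \<in> T" and T: "psubspace T" and x: "x \<in> pspan S"
  have "f ` S \<subseteq> T" using S by blast
  then have "pspan (f ` S) \<subseteq> T" using T by (rule pv.span_minimal)
  moreover have "pspan (f ` S) = f ` pspan S" using f by (rule module_hom.span_image)
  ultimately show "f x \<in> T" using x by blast
qed

lemma plin_span_zero: "plin f \<Longrightarrow> (\<And>s. s \<in> S \<Longrightarrow> f s = 0) \<Longrightarrow> x \<in> pspan S \<Longrightarrow> f x = 0"
  using plin_span_into[of f S "{0}" x] by auto

lemma plin_mult_left: "plin (\<lambda>g. u * g)"
  by (rule plinI) (simp_all add: psmult_conv distrib_left mult.left_commute)

lemma plin_mult_right: "plin (\<lambda>g. g * u)"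
  by (rule plinI) (simp_all add: psmult_conv distrib_right mult.assoc)

lemma plin_pd: "plin (pd i)"
  by (rule plinI) (simp_all add: pd_add pd_psmult)

lemma psmult_mult_left: "psmult c p * q = psmult c (p * q)"
  by (simp add: psmult_conv mult.assoc)

lemma psmult_mult_right: "p * psmult c q = psmult c (p * q)"
  by (simp add: psmult_conv mult.left_commute)

lemma psmult_sum: "psmult c (sum g A) = (\<Sum>a\<in>A. psmult c (g a))"
  by (simp add: psmult_conv sum_distrib_left)

lemma sum_psmult: "psmult (sum g A) p = (\<Sum>a\<in>A. psmult (g a) p)"
  by (induction A rule: infinite_finite_induct) (simp_all add: pv.scale_left_distrib)

lemma psmult_zero[simp]: "psmult c 0 = 0" "psmult 0 p = 0"
  by (simp_all add: psmult_conv)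

lemma psmult_one[simp]: "psmult 1 p = p"
  by (simp add: psmult_conv)

definition Dd :: "('n::finite \<Rightarrow> 'k) \<Rightarrow> ('n, 'k::field) mpoly \<Rightarrow> ('n, 'k) mpoly" where
  "Dd c p = (\<Sum>i\<in>UNIV. psmult (c i) (pd i p))"

definition bil :: "('n::finite \<Rightarrow> 'k) \<Rightarrow> ('n, 'k::field) mpoly \<Rightarrow> 'k" where
  "bil c m = (\<Sum>i\<in>UNIV. c i * cf m i)"

lemma Dd_add: "Dd c (p + q) = Dd c p + Dd c q"
  by (simp add: Dd_def pd_add pv.scale_right_distrib sum.distrib)

lemma Dd_psmult: "Dd c (psmult a p) = psmult a (Dd c p)"
  by (simp add: Dd_def pd_psmult psmult_sum mult.commute)

lemma plin_Dd: "plin (Dd c)"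
  by (rule plinI) (simp_all add: Dd_add Dd_psmult)

lemma Dd_zero[simp]: "Dd c 0 = 0"
  by (simp add: Dd_def)

lemma Dd_diff: "Dd c (p - q) = Dd c p - Dd c q"
  using Dd_add[of c "p - q" q] by (simp add: algebra_simps)

lemma Dd_sum: "Dd c (sum g A) = (\<Sum>a\<in>A. Dd c (g a))"
  by (induction A rule: infinite_finite_induct) (simp_all add: Dd_add)

lemma Dd_mult: "Dd c (p * q) = Dd c p * q + p * Dd c q"
  by (simp add: Dd_def pd_mult pv.scale_right_distrib sum.distrib sum_distrib_left sum_distrib_right
      psmult_mult_left psmult_mult_right)

lemma Dd_const: "Dd c (Poly_Mapping.single 0 a) = 0"
  by (simp add: Dd_def pd_const)

lemma Dd_one: "Dd c 1 = 0"
  using Dd_const[of c 1] by simp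

lemma Dd_comm: "Dd c (Dd e p) = Dd e (Dd c p)"
proof -
  have "Dd c (Dd e p) = (\<Sum>i\<in>UNIV. \<Sum>j\<in>UNIV. psmult (c i * e j) (pd i (pd j p)))"
    by (simp add: Dd_def pd_sum pd_psmult psmult_sum)
  also have "\<dots> = (\<Sum>j\<in>UNIV. \<Sum>i\<in>UNIV. psmult (c i * e j) (pd j (pd i p)))"
    by (subst sum.swap) (simp add: pd_comm)
  also have "\<dots> = Dd e (Dd c p)"
    by (simp add: Dd_def pd_sum pd_psmult psmult_sum mult.commute)
  finally show ?thesis .
qed

lemma Dd_Sdeg: "p \<in> Sdeg m \<Longrightarrow> Dd c p \<in> Sdeg (m - 1)"
  unfolding Dd_def
  by (rule pv.subspace_sum[OF Sdeg_subspace]) (rule pv.subspace_scale[OF Sdeg_subspace Sdeg_pd])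

lemma pd_lin: "m \<in> Sdeg 1 \<Longrightarrow> pd i m = Poly_Mapping.single 0 (cf m i)"
  for m :: "('n::finite, 'k::field) mpoly"
proof -
  assume m: "m \<in> Sdeg 1"
  then have "pd i m \<in> Sdeg 0" using Sdeg_pd[OF m] by simp
  then have "pd i m = Poly_Mapping.single 0 (Poly_Mapping.lookup (pd i m) 0)" by (rule Sdeg0_const)
  then show ?thesis by (simp add: lookup_pd cf_def)
qed

lemma single_sum: "Poly_Mapping.single k (sum g A) = (\<Sum>a\<in>A. Poly_Mapping.single k (g a))"
  by (induction A rule: infinite_finite_induct) (simp_all add: single_add)

lemma Dd_lin: "m \<in> Sdeg 1 \<Longrightarrow> Dd c m = Poly_Mapping.single 0 (bil c m)"
  by (simp add: Dd_def bil_def pd_lin psmult_conv mult_single flip: single_sum)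

lemma Dd_unit: "Dd (\<lambda>j. if j = i then 1 else 0) p = pd i p"
proof -
  have "Dd (\<lambda>j. if j = i then 1 else 0) p = (\<Sum>j\<in>UNIV. if j = i then pd j p else 0)"
    unfolding Dd_def by (rule sum.cong) auto
  then show ?thesis by simp
qed

lemma Dd_plus_dir: "Dd (\<lambda>j. c j + e j) p = Dd c p + Dd e p"
  by (simp add: Dd_def pv.scale_left_distrib sum.distrib)

lemma Dd_in_span: "Dd c f \<in> grad_span f"
  unfolding Dd_def grad_span_def
  by (intro pv.span_sum pv.span_scale pv.span_base) auto


lemma symp_subspace: "psubspace (symp U m)"
  unfolding symp_def by (rule pv.subspace_span)

lemma symp_gen: "length ls = m \<Longrightarrow> set ls \<subseteq> U \<Longrightarrow> prod_list ls \<in> symp U m"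
  unfolding symp_def by (rule pv.span_base) blast

lemma symp_induct:
  assumes "g \<in> symp U m" "psubspace T" "\<And>ls. length ls = m \<Longrightarrow> set ls \<subseteq> U \<Longrightarrow> f (prod_list ls) \<in> T"
    "plin f"
  shows "f g \<in> T"
  using plin_span_into[OF assms(4) _ assms(2) assms(1)[unfolded symp_def]] assms(3) by blast

lemma symp_mult: "g \<in> symp U a \<Longrightarrow> h \<in> symp U b \<Longrightarrow> g * h \<in> symp U (a + b)"
proof -
  assume g: "g \<in> symp U a" and h: "h \<in> symp U b"
  have 1: "prod_list ls * h \<in> symp U (a + b)" if ls: "length ls = a" "set ls \<subseteq> U" for ls
  proof -
    have "(\<lambda>x. prod_list ls * x) h \<in> symp U (a + b)"
    proof (rule symp_induct[OF h symp_subspace])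
      fix ls' assume "length ls' = b" "set ls' \<subseteq> U"
      then show "prod_list ls * prod_list ls' \<in> symp U (a + b)"
        using symp_gen[of "ls @ ls'" "a + b" U] ls by simp
    qed (rule plin_mult_left)
    then show ?thesis by simp
  qed
  have "(\<lambda>x. x * h) g \<in> symp U (a + b)"
    by (rule symp_induct[OF g symp_subspace]) (use 1 plin_mult_right in auto)
  then show ?thesis by simp
qed

lemma symp_lin_mem: "u \<in> U \<Longrightarrow> u \<in> symp U 1"
  using symp_gen[of "[u]" 1 U] by simp

lemma symp_lin: "psubspace U \<Longrightarrow> symp U 1 = U"
proof -
  assume U: "psubspace U"
  have "{prod_list ls | ls. length ls = 1 \<and> set ls \<subseteq> U} = U"
  proof
    show "{prod_list ls | ls. length ls = 1 \<and> set ls \<subseteq> U} \<subseteq> U"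
      by (auto simp: length_Suc_conv)
    show "U \<subseteq> {prod_list ls | ls. length ls = 1 \<and> set ls \<subseteq> U}"
    proof
      fix u assume "u \<in> U"
      then show "u \<in> {prod_list ls | ls. length ls = 1 \<and> set ls \<subseteq> U}"
        by (intro CollectI exI[of _ "[u]"]) simp
    qed
  qed
  then show ?thesis unfolding symp_def using U by simp
qed

lemma prod_list_Sdeg: "set ls \<subseteq> Sdeg 1 \<Longrightarrow> prod_list ls \<in> Sdeg (length ls)"
  for ls :: "('n::finite, 'k::field) mpoly list"
proof (induction ls)
  case Nil
  show ?case using const_Sdeg[of 1] by simp
next
  case (Cons u ls)
  then show ?case using Sdeg_mult[of u 1 "prod_list ls" "length ls"] by simp
qed

lemma symp_Sdeg: "U \<subseteq> Sdeg 1 \<Longrightarrow> symp U m \<subseteq> Sdeg m"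
  for U :: "('n::finite, 'k::field) mpoly set"
proof -
  assume U: "U \<subseteq> Sdeg 1"
  have "{prod_list ls | ls. length ls = m \<and> set ls \<subseteq> U} \<subseteq> Sdeg m"
  proof
    fix x assume "x \<in> {prod_list ls | ls. length ls = m \<and> set ls \<subseteq> U}"
    then obtain ls where "x = prod_list ls" "length ls = m" "set ls \<subseteq> Sdeg 1" using U by blast
    then show "x \<in> Sdeg m" using prod_list_Sdeg[of ls] by simp
  qed
  then show ?thesis unfolding symp_def by (rule pv.span_minimal[OF _ Sdeg_subspace])
qed

lemma symp_zero: "symp {0} (Suc m) = {0}"
proof -
  have "{prod_list ls | ls. length ls = Suc m \<and> set ls \<subseteq> {0::('a,'b::field) mpoly}} \<subseteq> {0}"
    by (auto simp: length_Suc_conv)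
  then have "symp {0::('a,'b::field) mpoly} (Suc m) \<subseteq> {0}"
    unfolding symp_def using pv.span_minimal pv.subspace_single_0 by blast
  then show ?thesis using symp_subspace pv.subspace_0 by blast
qed

lemma Dd_kill_symp: "(\<And>u. u \<in> U \<Longrightarrow> Dd c u = 0) \<Longrightarrow> g \<in> symp U m \<Longrightarrow> Dd c g = 0"
proof -
  assume k: "\<And>u. u \<in> U \<Longrightarrow> Dd c u = 0" and g: "g \<in> symp U m"
  have gen: "set ls \<subseteq> U \<Longrightarrow> Dd c (prod_list ls) = 0" for ls
    by (induction ls) (auto simp: Dd_one Dd_mult k)
  show ?thesis
    using symp_induct[OF g pv.subspace_single_0 _ plin_Dd, of c] gen by auto
qed

lemma Dd_symp: "U \<subseteq> Sdeg 1 \<Longrightarrow> g \<in> symp U (Suc m) \<Longrightarrow> Dd c g \<in> symp U m"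
proof -
  assume U: "U \<subseteq> Sdeg 1" and g: "g \<in> symp U (Suc m)"
  have gen: "\<forall>m. length ls = Suc m \<longrightarrow> set ls \<subseteq> U \<longrightarrow> Dd c (prod_list ls) \<in> symp U m" for ls
  proof (induction ls)
    case Nil then show ?case by simp
  next
    case (Cons u ls)
    show ?case
    proof (intro allI impI)
      fix m assume len: "length (u # ls) = Suc m" and set: "set (u # ls) \<subseteq> U"
      have u: "u \<in> Sdeg 1" "u \<in> U" using U set by auto
      have P: "prod_list ls \<in> symp U m" using len set by (intro symp_gen) auto
      have 1: "Dd c u * prod_list ls \<in> symp U m"
        using pv.subspace_scale[OF symp_subspace P] by (simp add: Dd_lin[OF u(1)] flip: psmult_conv)
      have 2: "u * Dd c (prod_list ls) \<in> symp U m"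
      proof (cases ls)
        case Nil then show ?thesis by (simp add: Dd_one pv.subspace_0[OF symp_subspace])
      next
        case (Cons v vs)
        then obtain m' where m': "m = Suc m'" using len by auto
        have "Dd c (prod_list ls) \<in> symp U m'" using Cons.IH len set m' by auto
        then show ?thesis using symp_mult[OF symp_lin_mem[OF u(2)]] m' by fastforce
      qed
      show "Dd c (prod_list (u # ls)) \<in> symp U m"
        using 1 2 by (simp add: Dd_mult pv.subspace_add[OF symp_subspace])
    qed
  qed
  show ?thesis
    by (rule symp_induct[OF g symp_subspace _ plin_Dd]) (use gen in blast)
qed

lemma lin_mult_symp: "u \<in> U \<Longrightarrow> g \<in> symp U m \<Longrightarrow> u * g \<in> symp U (Suc m)"
  using symp_mult[OF symp_lin_mem] by fastforce


definition proj :: "('n, 'k::field) mpoly set \<Rightarrow> ('n, 'k) mpoly set \<Rightarrow> ('n, 'k) mpoly \<Rightarrow> ('n, 'k) mpoly" where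
  "proj A B m = (THE u. u \<in> A \<and> m - u \<in> B)"

definition alpha :: "('n::finite, 'k::field) mpoly set \<Rightarrow> ('n, 'k) mpoly set \<Rightarrow> 'n \<Rightarrow> 'n \<Rightarrow> 'k" where
  "alpha A B i j = cf (proj A B (Xv j)) i"

lemma cf_add: "cf (p + q) i = cf p i + cf q i"
  by (simp add: cf_def lookup_add)

lemma cf_psmult: "cf (psmult c p) i = c * cf p i"
  by (simp add: cf_def lookup_psmult)

lemma cf_sum: "cf (sum g A) i = (\<Sum>a\<in>A. cf (g a) i)"
  by (simp add: cf_def lookup_sum)

lemma cf_zero[simp]: "cf 0 i = 0"
  by (simp add: cf_def)

lemma cf_Xv: "cf (Xv j) i = (if i = j then 1 else 0)"
proof -
  have "ev j = ev i \<longleftrightarrow> i = j" by (metis lookup_ev zero_neq_one)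
  then show ?thesis by (simp add: cf_def Xv_def lookup_single when_def)
qed

lemma setsum_sub: "setsum A B \<subseteq> setsum B A"
proof
  fix x assume "x \<in> setsum A B"
  then obtain a b where "x = a + b" "a \<in> A" "b \<in> B" unfolding setsum_def by blast
  then have "x = b + a \<and> b \<in> B \<and> a \<in> A" by (simp add: add.commute)
  then show "x \<in> setsum B A" unfolding setsum_def by blast
qed

lemma setsum_comm: "setsum A B = setsum B A"
  using setsum_sub by blast

lemma vdecomp_sym: "vdecomp U W \<Longrightarrow> vdecomp W U"
  unfolding vdecomp_def using setsum_comm[of U W] by (simp add: Int_commute)

locale vdec =
  fixes U W :: "('n::finite, 'k::field) mpoly set"
  assumes vd: "vdecomp U W"
begin

lemma U_sub: "psubspace U" and W_sub: "psubspace W" and U_S1: "U \<subseteq> Sdeg 1" and W_S1: "W \<subseteq> Sdeg 1"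
  and UW_int: "U \<inter> W = {0}" and UW_sum: "setsum U W = Sdeg 1"
  using vd unfolding vdecomp_def by auto

lemma swap: "vdec W U"
  using vd vdecomp_sym by unfold_locales blast

lemma uniq: "u \<in> U \<Longrightarrow> w \<in> W \<Longrightarrow> u' \<in> U \<Longrightarrow> w' \<in> W \<Longrightarrow> u + w = u' + w' \<Longrightarrow> u = u'"
proof -
  assume a: "u \<in> U" "w \<in> W" "u' \<in> U" "w' \<in> W" "u + w = u' + w'"
  then have d: "u - u' = w' - w" by (simp add: algebra_simps)
  have "u - u' \<in> U" using a pv.subspace_diff[OF U_sub] by blast
  moreover have "w' - w \<in> W" using a pv.subspace_diff[OF W_sub] by blast
  then have "u - u' \<in> W" using d by simp
  ultimately have "u - u' \<in> U \<inter> W" by blast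
  then have "u - u' = 0" using UW_int by blast
  then show "u = u'" by simp
qed

lemma proj_mem: assumes m: "m \<in> Sdeg 1" shows "proj U W m \<in> U" "m - proj U W m \<in> W"
proof -
  obtain u w where uw: "u \<in> U" "w \<in> W" "m = u + w" using m UW_sum unfolding setsum_def by blast
  have "proj U W m = u"
    unfolding proj_def
  proof (rule the_equality)
    show "u \<in> U \<and> m - u \<in> W" using uw by simp
    fix u' assume "u' \<in> U \<and> m - u' \<in> W"
    then show "u' = u" using uniq[of u' "m - u'" u w] uw by simp
  qed
  then show "proj U W m \<in> U" "m - proj U W m \<in> W" using uw by simp_all
qed

lemma proj_eq: "u \<in> U \<Longrightarrow> w \<in> W \<Longrightarrow> proj U W (u + w) = u"
proof -
  assume uw: "u \<in> U" "w \<in> W"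
  then have m: "u + w \<in> Sdeg 1" using UW_sum unfolding setsum_def by blast
  show ?thesis using uniq[OF proj_mem(1)[OF m] _ uw] proj_mem(2)[OF m] by simp
qed

lemma proj_U: "u \<in> U \<Longrightarrow> proj U W u = u"
  using proj_eq[of u 0] pv.subspace_0[OF W_sub] by simp

lemma proj_W: "w \<in> W \<Longrightarrow> proj U W w = 0"
  using proj_eq[of 0 w] pv.subspace_0[OF U_sub] by simp

lemma proj_add: "a \<in> Sdeg 1 \<Longrightarrow> b \<in> Sdeg 1 \<Longrightarrow> proj U W (a + b) = proj U W a + proj U W b"
proof -
  assume a: "a \<in> Sdeg 1" and b: "b \<in> Sdeg 1"
  have "a + b = (proj U W a + proj U W b) + ((a - proj U W a) + (b - proj U W b))" by simp
  moreover have "proj U W a + proj U W b \<in> U"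
    using proj_mem(1)[OF a] proj_mem(1)[OF b] by (rule pv.subspace_add[OF U_sub])
  moreover have "(a - proj U W a) + (b - proj U W b) \<in> W"
    using proj_mem(2)[OF a] proj_mem(2)[OF b] by (rule pv.subspace_add[OF W_sub])
  ultimately show ?thesis using proj_eq by metis
qed

lemma proj_psmult: "a \<in> Sdeg 1 \<Longrightarrow> proj U W (psmult c a) = psmult c (proj U W a)"
proof -
  assume a: "a \<in> Sdeg 1"
  have "psmult c a = psmult c (proj U W a) + psmult c (a - proj U W a)"
    by (simp flip: pv.scale_right_distrib)
  moreover have "psmult c (proj U W a) \<in> U" using pv.subspace_scale[OF U_sub proj_mem(1)[OF a]] .
  moreover have "psmult c (a - proj U W a) \<in> W" using pv.subspace_scale[OF W_sub proj_mem(2)[OF a]] .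
  ultimately show ?thesis using proj_eq by metis
qed

lemma proj_lincomb: "finite I \<Longrightarrow> (\<And>i. i \<in> I \<Longrightarrow> m i \<in> Sdeg 1) \<Longrightarrow>
    proj U W (\<Sum>i\<in>I. psmult (c i) (m i)) = (\<Sum>i\<in>I. psmult (c i) (proj U W (m i)))"
proof (induction I rule: finite_induct)
  case empty then show ?case using proj_U pv.subspace_0[OF U_sub] by simp
next
  case (insert x F)
  have "(\<Sum>i\<in>F. psmult (c i) (m i)) \<in> Sdeg 1"
    using insert by (intro pv.subspace_sum[OF Sdeg_subspace] pv.subspace_scale[OF Sdeg_subspace]) auto
  moreover have "psmult (c x) (m x) \<in> Sdeg 1" using insert by (intro pv.subspace_scale[OF Sdeg_subspace]) auto
  ultimately show ?case using insert by (simp add: proj_add proj_psmult)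
qed

lemma proj_swap: "m \<in> Sdeg 1 \<Longrightarrow> proj W U m = m - proj U W m"
proof -
  assume m: "m \<in> Sdeg 1"
  have "m = (m - proj U W m) + proj U W m" by simp
  then show ?thesis using vdec.proj_eq[OF swap, of "m - proj U W m" "proj U W m"] proj_mem[OF m] by metis
qed

lemma proj_expand: "m \<in> Sdeg 1 \<Longrightarrow> proj U W m = (\<Sum>j\<in>UNIV. psmult (cf m j) (proj U W (Xv j)))"
proof -
  assume m: "m \<in> Sdeg 1"
  have "proj U W m = proj U W (\<Sum>i\<in>UNIV. psmult (cf m i) (Xv i))"
    using arg_cong[OF lin_expand[OF m], of "proj U W"] .
  also have "\<dots> = (\<Sum>j\<in>UNIV. psmult (cf m j) (proj U W (Xv j)))"
    using proj_lincomb[OF finite_UNIV, of Xv "cf m"] Xv_Sdeg by blast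
  finally show ?thesis .
qed

lemma bil_alpha: "m \<in> Sdeg 1 \<Longrightarrow> bil (alpha U W i) m = cf (proj U W m) i"
  by (simp add: proj_expand bil_def alpha_def cf_sum cf_psmult mult.commute)

lemma alpha_kill: "w \<in> W \<Longrightarrow> Dd (alpha U W i) w = 0"
  using W_S1 by (auto simp: Dd_lin bil_alpha proj_W)

lemma alpha_sum: "alpha U W i j + alpha W U i j = (if i = j then 1 else 0)"
  by (simp add: alpha_def proj_swap[OF Xv_Sdeg] cf_add cf_Xv flip: cf_add)

lemma pd_split: "pd i p = Dd (alpha U W i) p + Dd (alpha W U i) p"
proof -
  have "(\<lambda>j. alpha U W i j + alpha W U i j) = (\<lambda>j. if j = i then 1 else 0)"
    by (auto simp: alpha_sum)
  then show ?thesis using Dd_plus_dir[of "alpha U W i" "alpha W U i" p] Dd_unit[of i p] by simp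
qed

lemma cross_zero: "(\<Sum>i\<in>UNIV. proj U W (Xv i) * Dd (alpha W U i) g) = 0"
proof -
  have "(\<Sum>i\<in>UNIV. proj U W (Xv i) * Dd (alpha W U i) g)
      = (\<Sum>j\<in>UNIV. (\<Sum>i\<in>UNIV. psmult (alpha W U i j) (proj U W (Xv i))) * pd j g)"
    by (simp add: Dd_def sum_distrib_left sum_distrib_right psmult_mult_left psmult_mult_right)
       (rule sum.swap)
  also have "\<dots> = 0"
  proof (rule sum.neutral, rule ballI)
    fix j
    have "(\<Sum>i\<in>UNIV. psmult (alpha W U i j) (proj U W (Xv i))) = proj U W (proj W U (Xv j))"
    proof -
      have "proj U W (proj W U (Xv j)) = proj U W (\<Sum>i\<in>UNIV. psmult (cf (proj W U (Xv j)) i) (Xv i))"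
        using arg_cong[OF lin_expand[OF vdec.proj_mem(1)[OF swap Xv_Sdeg, THEN subsetD[OF W_S1]]], of "proj U W"] .
      also have "\<dots> = (\<Sum>i\<in>UNIV. psmult (cf (proj W U (Xv j)) i) (proj U W (Xv i)))"
        using proj_lincomb[OF finite_UNIV, of Xv] Xv_Sdeg by blast
      finally show ?thesis by (simp add: alpha_def)
    qed
    also have "\<dots> = 0" using proj_W vdec.proj_mem(1)[OF swap Xv_Sdeg] by simp
    finally show "(\<Sum>i\<in>UNIV. psmult (alpha W U i j) (proj U W (Xv i))) * pd j g = 0" by simp
  qed
  finally show ?thesis .
qed

lemma euler_split: "g \<in> Sdeg m \<Longrightarrow> psmult (of_nat m) g =
  (\<Sum>i\<in>UNIV. proj U W (Xv i) * Dd (alpha U W i) g) + (\<Sum>i\<in>UNIV. proj W U (Xv i) * Dd (alpha W U i) g)"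
proof -
  assume g: "g \<in> Sdeg m"
  have X: "Xv i = proj U W (Xv i) + proj W U (Xv i)" for i :: 'n
    by (simp add: proj_swap[OF Xv_Sdeg])
  have "psmult (of_nat m) g = (\<Sum>i\<in>UNIV. Xv i * pd i g)" using euler[OF g] by simp
  also have "\<dots> = (\<Sum>i\<in>UNIV. proj U W (Xv i) * Dd (alpha U W i) g) + (\<Sum>i\<in>UNIV. proj U W (Xv i) * Dd (alpha W U i) g)
     + (\<Sum>i\<in>UNIV. proj W U (Xv i) * Dd (alpha W U i) g) + (\<Sum>i\<in>UNIV. proj W U (Xv i) * Dd (alpha U W i) g)"
  proof -
    have t: "Xv i * pd i g = proj U W (Xv i) * Dd (alpha U W i) g + proj U W (Xv i) * Dd (alpha W U i) g
       + proj W U (Xv i) * Dd (alpha W U i) g + proj W U (Xv i) * Dd (alpha U W i) g" for i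
    proof -
      have "Xv i * pd i g = (proj U W (Xv i) + proj W U (Xv i)) * (Dd (alpha U W i) g + Dd (alpha W U i) g)"
        using X[of i] pd_split[of i g] by metis
      then show ?thesis by (simp only: distrib_left distrib_right ac_simps)
    qed
    show ?thesis by (simp only: t sum.distrib)
  qed
  also have "\<dots> = (\<Sum>i\<in>UNIV. proj U W (Xv i) * Dd (alpha U W i) g) + (\<Sum>i\<in>UNIV. proj W U (Xv i) * Dd (alpha W U i) g)"
    using cross_zero[of g] vdec.cross_zero[OF swap, of g] by simp
  finally show ?thesis .
qed

lemma symp_inter: "(of_nat m :: 'k) \<noteq> 0 \<Longrightarrow> g \<in> symp U m \<Longrightarrow> g \<in> symp W m \<Longrightarrow> g = 0"
proof -
  assume m: "(of_nat m :: 'k) \<noteq> 0" and gU: "g \<in> symp U m" and gW: "g \<in> symp W m"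
  have "pd i g = 0" for i
  proof -
    have "Dd (alpha U W i) g = 0" by (rule Dd_kill_symp[OF _ gW]) (rule alpha_kill)
    moreover have "Dd (alpha W U i) g = 0" by (rule Dd_kill_symp[OF _ gU]) (rule vdec.alpha_kill[OF swap])
    ultimately show ?thesis by (simp add: pd_split)
  qed
  then show "g = 0" using all_pd_zero[of g m] symp_Sdeg[OF U_S1] gU m by blast
qed

end


abbreviation pfin :: "('n, 'k::field) mpoly set \<Rightarrow> bool" where
  "pfin A \<equiv> (\<exists>F. finite F \<and> A \<subseteq> pspan F)"

lemma pfin_basis: "pfin A \<Longrightarrow> \<exists>B. B \<subseteq> A \<and> pv.independent B \<and> A \<subseteq> pspan B \<and> card B = pdim A \<and> finite B"
proof -
  assume "pfin A"
  then obtain F where F: "finite F" "A \<subseteq> pspan F" by blast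
  obtain B where B: "B \<subseteq> A" "pv.independent B" "A \<subseteq> pspan B" "card B = pdim A"
    using pv.basis_exists by blast
  have "finite B" using pv.independent_span_bound[OF F(1) B(2)] B(1) F(2) by blast
  then show ?thesis using B by blast
qed

lemma pdim_mono: "A \<subseteq> B \<Longrightarrow> pfin B \<Longrightarrow> pdim A \<le> pdim B"
proof -
  assume AB: "A \<subseteq> B" and fB: "pfin B"
  obtain BB where BB: "BB \<subseteq> B" "pv.independent BB" "B \<subseteq> pspan BB" "card BB = pdim B" "finite BB"
    using pfin_basis[OF fB] by blast
  have "A \<subseteq> pspan BB" using AB BB by blast
  then show ?thesis using pv.dim_le_card[of A BB] BB by simp
qed

lemma pfin_mono: "A \<subseteq> B \<Longrightarrow> pfin B \<Longrightarrow> pfin A"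
  by blast

lemma pfin_span: "finite F \<Longrightarrow> pfin (pspan F)"
  by blast

lemma dim_direct_sum:
  assumes A: "psubspace A" "pfin A" and B: "psubspace B" "pfin B" and AB: "A \<inter> B = {0}"
  shows "pdim (setsum A B) = pdim A + pdim B"
proof -
  obtain BA where BA: "BA \<subseteq> A" "pv.independent BA" "A \<subseteq> pspan BA" "card BA = pdim A" "finite BA"
    using pfin_basis[OF A(2)] by blast
  obtain BB where BB: "BB \<subseteq> B" "pv.independent BB" "B \<subseteq> pspan BB" "card BB = pdim B" "finite BB"
    using pfin_basis[OF B(2)] by blast
  have "0 \<notin> BA" using BA(2) pv.dependent_zero by blast
  have disj: "BA \<inter> BB = {}"
  proof (rule ccontr)
    assume "BA \<inter> BB \<noteq> {}"
    then obtain x where x: "x \<in> BA" "x \<in> BB" by blast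
    then have "x \<in> A \<inter> B" using BA(1) BB(1) by blast
    then have "x = 0" using AB by blast
    then show False using x \<open>0 \<notin> BA\<close> by simp
  qed
  have spA: "pspan BA = A" using BA A(1) pv.span_subspace by blast
  have spB: "pspan BB = B" using BB B(1) pv.span_subspace by blast
  have sub: "BA \<union> BB \<subseteq> setsum A B"
  proof
    fix x assume "x \<in> BA \<union> BB"
    then show "x \<in> setsum A B"
    proof
      assume "x \<in> BA"
      then have "x = x + 0 \<and> x \<in> A \<and> 0 \<in> B" using BA(1) pv.subspace_0[OF B(1)] by auto
      then show ?thesis unfolding setsum_def by blast
    next
      assume "x \<in> BB"
      then have "x = 0 + x \<and> 0 \<in> A \<and> x \<in> B" using BB(1) pv.subspace_0[OF A(1)] by auto
      then show ?thesis unfolding setsum_def by blast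
    qed
  qed
  have span: "setsum A B \<subseteq> pspan (BA \<union> BB)"
    unfolding pv.span_Un spA spB setsum_def by blast
  have indep: "pv.independent (BA \<union> BB)"
  proof (rule pv.independent_if_scalars_zero)
    show "finite (BA \<union> BB)" using BA BB by simp
    fix g x assume s: "(\<Sum>x\<in>BA \<union> BB. psmult (g x) x) = 0" and x: "x \<in> BA \<union> BB"
    have "(\<Sum>x\<in>BA. psmult (g x) x) + (\<Sum>x\<in>BB. psmult (g x) x) = 0"
      using s by (simp add: sum.union_disjoint[OF BA(5) BB(5) disj])
    then have e: "(\<Sum>x\<in>BA. psmult (g x) x) = - (\<Sum>x\<in>BB. psmult (g x) x)"
      by (simp add: eq_neg_iff_add_eq_0)
    have inA: "(\<Sum>x\<in>BA. psmult (g x) x) \<in> A"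
      using BA(1) by (intro pv.subspace_sum[OF A(1)] pv.subspace_scale[OF A(1)]) auto
    have "(\<Sum>x\<in>BB. psmult (g x) x) \<in> B"
      using BB(1) by (intro pv.subspace_sum[OF B(1)] pv.subspace_scale[OF B(1)]) auto
    then have "- (\<Sum>x\<in>BB. psmult (g x) x) \<in> B" by (rule pv.subspace_neg[OF B(1)])
    then have "(\<Sum>x\<in>BA. psmult (g x) x) \<in> A \<inter> B" using inA e by simp
    then have zA: "(\<Sum>x\<in>BA. psmult (g x) x) = 0" using AB by blast
    then have zB: "(\<Sum>x\<in>BB. psmult (g x) x) = 0" using e by simp
    show "g x = 0"
      using x pv.independentD[OF BA(2) BA(5) subset_refl zA] pv.independentD[OF BB(2) BB(5) subset_refl zB]
      by blast
  qed
  have "pdim (setsum A B) = card (BA \<union> BB)"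
    using pv.dim_unique[OF sub span indep refl] .
  also have "\<dots> = pdim A + pdim B" using card_Un_disjoint[OF BA(5) BB(5) disj] BA BB by simp
  finally show ?thesis .
qed

lemma Xv_inj: "inj (Xv :: 'n \<Rightarrow> ('n, 'k::field) mpoly)"
  by (rule injI) (metis cf_Xv one_neq_zero)

lemma Sdeg1_span: "(Sdeg 1 :: ('n::finite, 'k::field) mpoly set) \<subseteq> pspan (range Xv)"
proof
  fix m :: "('n, 'k) mpoly" assume m: "m \<in> Sdeg 1"
  have s: "(\<Sum>i\<in>UNIV. psmult (cf m i) (Xv i)) \<in> pspan (range Xv)"
    by (intro pv.span_sum pv.span_scale pv.span_base) auto
  have e: "(\<Sum>i\<in>UNIV. psmult (cf m i) (Xv i)) = m" using lin_expand[OF m] by (rule sym)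
  show "m \<in> pspan (range Xv)" using s unfolding e .
qed

lemma pfin_Sdeg1: "pfin (Sdeg 1 :: ('n::finite, 'k::field) mpoly set)"
  by (intro exI[of _ "range Xv"] conjI Sdeg1_span) simp

lemma dim_Sdeg1: "pdim (Sdeg 1 :: ('n::finite, 'k::field) mpoly set) = card (UNIV :: 'n set)"
proof -
  have indep: "pv.independent (range (Xv :: 'n \<Rightarrow> ('n, 'k) mpoly))"
  proof (rule pv.independent_if_scalars_zero)
    show "finite (range (Xv :: 'n \<Rightarrow> ('n, 'k) mpoly))" by simp
    fix g x assume s: "(\<Sum>x\<in>range (Xv :: 'n \<Rightarrow> ('n, 'k) mpoly). psmult (g x) x) = 0" and x: "x \<in> range (Xv :: 'n \<Rightarrow> ('n, 'k) mpoly)"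
    then obtain j where j: "x = Xv j" by blast
    have "(\<Sum>i\<in>UNIV. psmult (g (Xv i)) (Xv i :: ('n, 'k) mpoly)) = 0"
      using s by (simp add: sum.reindex[OF Xv_inj])
    then have "cf (\<Sum>i\<in>UNIV. psmult (g (Xv i)) (Xv i :: ('n, 'k) mpoly)) j = 0" by simp
    then show "g x = 0" by (simp add: cf_sum cf_psmult cf_Xv j if_distrib cong: if_cong)
  qed
  have "pdim (Sdeg 1 :: ('n, 'k) mpoly set) = card (range (Xv :: 'n \<Rightarrow> ('n, 'k) mpoly))"
    by (rule pv.dim_unique[OF _ Sdeg1_span indep refl]) (use Xv_Sdeg in blast)
  then show ?thesis by (simp add: card_image[OF Xv_inj])
qed

lemma rank_compare:
  assumes T: "plin T" and K: "plin K" and X: "finite X" and ker: "\<And>x. K x = 0 \<Longrightarrow> T x = 0"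
  shows "pdim (pspan (T ` X)) \<le> pdim (pspan (K ` X))"
proof -
  obtain C where C: "C \<subseteq> K ` X" "pv.independent C" "K ` X \<subseteq> pspan C"
    using pv.maximal_independent_subset[of "K ` X"] by blast
  obtain C' where C': "C' \<subseteq> X" "inj_on K C'" "C = K ` C'"
    using subset_image_inj[of C K X] C(1) by blast
  have fC': "finite C'" using C'(1) X finite_subset by blast
  have dK: "pdim (pspan (K ` X)) = card C'"
    using pv.basis_card_eq_dim[OF C(1) C(3) C(2)] card_image[OF C'(2)] C'(3) by simp
  have "T ` X \<subseteq> pspan (T ` C')"
  proof
    fix z assume "z \<in> T ` X"
    then obtain x where x: "x \<in> X" "z = T x" by blast
    have "K x \<in> pspan (K ` C')" using C(3) C'(3) x(1) by blast
    then have "K x \<in> K ` pspan C'" using module_hom.span_image[OF K] by simp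
    then obtain y where y: "y \<in> pspan C'" "K x = K y" by blast
    have "K (x - y) = 0" using y(2) module_hom.diff[OF K] by simp
    then have "T (x - y) = 0" by (rule ker)
    then have "T x = T y" using module_hom.diff[OF T] by simp
    moreover have "T y \<in> pspan (T ` C')" using y(1) module_hom.span_image[OF T] by blast
    ultimately show "z \<in> pspan (T ` C')" using x by simp
  qed
  then have "pdim (T ` X) \<le> card (T ` C')" using pv.dim_le_card[of "T ` X" "T ` C'"] fC' by simp
  also have "\<dots> \<le> card C'" using card_image_le[OF fC'] .
  finally show ?thesis using dK by simp
qed

lemma grad_indep:
  fixes f :: "('n::finite, 'k::field) mpoly"
  assumes grad: "pdim (grad_span f) = card (UNIV :: 'n set)"
    and s: "(\<Sum>j\<in>UNIV. psmult (c j) (pd j f)) = 0"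
  shows "c j = 0"
proof (rule ccontr)
  assume cj: "c j \<noteq> 0"
  have split: "(\<Sum>i\<in>UNIV. psmult (c i) (pd i f)) = psmult (c j) (pd j f) + (\<Sum>i\<in>UNIV - {j}. psmult (c i) (pd i f))"
    by (simp add: sum.remove[of UNIV j])
  have "pd j f = psmult (- inverse (c j)) (\<Sum>i\<in>UNIV - {j}. psmult (c i) (pd i f))"
  proof -
    have "psmult (c j) (pd j f) = - (\<Sum>i\<in>UNIV - {j}. psmult (c i) (pd i f))"
      using s split by (simp add: eq_neg_iff_add_eq_0)
    then have "psmult (inverse (c j)) (psmult (c j) (pd j f)) = psmult (inverse (c j)) (- (\<Sum>i\<in>UNIV - {j}. psmult (c i) (pd i f)))"
      by simp
    then show ?thesis using cj by (simp add: pv.scale_minus_right pv.scale_minus_left)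
  qed
  also have "\<dots> \<in> pspan ((\<lambda>i. pd i f) ` (UNIV - {j}))"
    by (intro pv.span_scale pv.span_sum pv.span_base) auto
  finally have pj: "pd j f \<in> pspan ((\<lambda>i. pd i f) ` (UNIV - {j}))" .
  have "range (\<lambda>i. pd i f) \<subseteq> pspan ((\<lambda>i. pd i f) ` (UNIV - {j}))"
  proof
    fix z assume "z \<in> range (\<lambda>i. pd i f)"
    then obtain i where "z = pd i f" by blast
    then show "z \<in> pspan ((\<lambda>i. pd i f) ` (UNIV - {j}))"
      using pj by (cases "i = j") (auto intro: pv.span_base)
  qed
  then have "grad_span f \<subseteq> pspan ((\<lambda>i. pd i f) ` (UNIV - {j}))"
    unfolding grad_span_def by (rule pv.span_minimal[OF _ pv.subspace_span])
  then have "pdim (grad_span f) \<le> card ((\<lambda>i. pd i f) ` (UNIV - {j}))"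
    by (rule pv.dim_le_card) simp
  also have "\<dots> \<le> card (UNIV - {j})" by (rule card_image_le) simp
  also have "\<dots> < card (UNIV :: 'n set)" by (rule card_Diff1_less) simp_all
  finally show False using grad by simp
qed


lemma Dd_scale_dir: "Dd (\<lambda>j. c * e j) p = psmult c (Dd e p)"
  by (simp add: Dd_def psmult_sum flip: pv.scale_scale)

lemma bil_add_dir: "bil (\<lambda>j. c j + e j) u = bil c u + bil e u"
  by (simp add: bil_def distrib_right sum.distrib)

lemma bil_scale_dir: "bil (\<lambda>j. a * e j) u = a * bil e u"
  by (simp add: bil_def sum_distrib_left mult.assoc)

lemma cf_Xv_fun: "cf (Xv i) = (\<lambda>j. if j = i then 1 else 0)"
  by (auto simp: cf_Xv)

lemma pfin_sub_Sdeg1: "U \<subseteq> Sdeg 1 \<Longrightarrow> pfin (U :: ('n::finite, 'k::field) mpoly set)"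
  using pfin_Sdeg1 by blast

lemma pdim_pos: "psubspace U \<Longrightarrow> pfin U \<Longrightarrow> U \<noteq> {0} \<Longrightarrow> pdim U \<noteq> 0"
proof
  assume U: "psubspace U" "pfin U" "U \<noteq> {0}" and d: "pdim U = 0"
  obtain B where B: "B \<subseteq> U" "pv.independent B" "U \<subseteq> pspan B" "card B = pdim U" "finite B"
    using pfin_basis[OF U(2)] by blast
  then have "B = {}" using d by simp
  then have "U \<subseteq> {0}" using B(3) by simp
  then show False using U pv.subspace_0 by blast
qed

lemma two_le_n:
  fixes U W :: "('n::finite, 'k::field) mpoly set"
  assumes vd: "vdecomp U W" and U0: "U \<noteq> {0}" and W0: "W \<noteq> {0}"
  shows "2 \<le> card (UNIV :: 'n set)"
    and "pdim U + pdim W = card (UNIV :: 'n set)"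
proof -
  interpret vdec U W using vd by unfold_locales
  have "pdim (setsum U W) = pdim U + pdim W"
    by (rule dim_direct_sum[OF U_sub pfin_sub_Sdeg1[OF U_S1] W_sub pfin_sub_Sdeg1[OF W_S1] UW_int])
  then show e: "pdim U + pdim W = card (UNIV :: 'n set)" using UW_sum dim_Sdeg1[where 'n='n and 'k='k] by simp
  have "pdim U \<noteq> 0" "pdim W \<noteq> 0"
    using pdim_pos[OF U_sub pfin_sub_Sdeg1[OF U_S1] U0] pdim_pos[OF W_sub pfin_sub_Sdeg1[OF W_S1] W0] by auto
  then show "2 \<le> card (UNIV :: 'n set)" using e by linarith
qed

lemma rank_bound:
  fixes f1 :: "('n::finite, 'k::field) mpoly"
  assumes U: "psubspace U" "U \<subseteq> Sdeg 1" and f1: "f1 \<in> symp U m"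
  shows "pdim (pspan (range (\<lambda>i. pd i f1))) \<le> pdim U"
proof -
  obtain BU where BU: "BU \<subseteq> U" "pv.independent BU" "U \<subseteq> pspan BU" "card BU = pdim U" "finite BU"
    using pfin_basis[OF pfin_sub_Sdeg1[OF U(2)]] by blast
  define T where "T x = Dd (cf x) f1" for x :: "('n, 'k) mpoly"
  define K where "K x = (\<Sum>u\<in>BU. psmult (bil (cf x) u) u)" for x :: "('n, 'k) mpoly"
  have cfa: "cf (x + y) = (\<lambda>j. cf x j + cf y j)" for x y :: "('n, 'k) mpoly" by (auto simp: cf_add)
  have cfs: "cf (psmult c x) = (\<lambda>j. c * cf x j)" for c and x :: "('n, 'k) mpoly" by (auto simp: cf_psmult)
  have plT: "plin T"
    by (rule plinI) (simp_all add: T_def cfa cfs Dd_plus_dir Dd_scale_dir)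
  have plK: "plin K"
    by (rule plinI) (simp_all add: K_def cfa cfs bil_add_dir bil_scale_dir pv.scale_left_distrib
        sum.distrib psmult_sum flip: pv.scale_scale)
  have ker: "T x = 0" if Kx: "K x = 0" for x
  proof -
    have "bil (cf x) u = 0" if u: "u \<in> BU" for u
      using pv.independentD[OF BU(2) BU(5) subset_refl Kx[unfolded K_def] u] .
    then have "Dd (cf x) u = 0" if u: "u \<in> BU" for u
      using u BU(1) U(2) by (auto simp: Dd_lin)
    then have "Dd (cf x) u = 0" if u: "u \<in> U" for u
      using plin_span_zero[OF plin_Dd] u BU(3) by blast
    then show "T x = 0" unfolding T_def using Dd_kill_symp[OF _ f1] by blast
  qed
  have "pdim (pspan (T ` range Xv)) \<le> pdim (pspan (K ` range Xv))"
    by (rule rank_compare[OF plT plK]) (simp_all add: ker)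
  moreover have "T ` range Xv = range (\<lambda>i. pd i f1)"
    by (auto simp: T_def cf_Xv_fun Dd_unit image_image)
  moreover have "pspan (K ` range Xv) \<subseteq> U"
  proof (rule pv.span_minimal[OF _ U(1)])
    show "K ` range Xv \<subseteq> U"
      using BU(1) by (auto simp: K_def intro!: pv.subspace_sum[OF U(1)] pv.subspace_scale[OF U(1)])
  qed
  then have "pdim (pspan (K ` range Xv)) \<le> pdim U"
    by (rule pdim_mono) (rule pfin_sub_Sdeg1[OF U(2)])
  ultimately show ?thesis by simp
qed


lemma char_le: "(of_nat (fact n) :: 'k::field) \<noteq> 0 \<Longrightarrow> 1 \<le> m \<Longrightarrow> m \<le> n \<Longrightarrow> (of_nat m :: 'k) \<noteq> 0"
proof -
  assume c: "(of_nat (fact n) :: 'k) \<noteq> 0" and m: "1 \<le> m" "m \<le> n"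
  have "m dvd fact n" using m by (intro dvd_fact) auto
  then obtain k where "fact n = m * k" by blast
  then have "(of_nat (fact n) :: 'k) = of_nat m * of_nat k" by simp
  then show ?thesis using c by auto
qed

lemma pspan_subspace_eq: "psubspace A \<Longrightarrow> pspan A = A"
  by (rule pv.span_eq_iff[THEN iffD2])

lemma fds_nontriv:
  fixes f :: "('n::finite, 'k::field) mpoly"
  assumes "form_direct_sum d f"
  shows "\<exists>U W :: ('n, 'k) mpoly set. vdecomp U W \<and> U \<noteq> {0} \<and> W \<noteq> {0}"
proof -
  obtain U W :: "('n, 'k) mpoly set" and f1 f2 :: "('n, 'k) mpoly" where h: "vdecomp U W" "f1 \<in> symp U (d+1)" "f2 \<in> symp W (d+1)" "f1 \<noteq> 0" "f2 \<noteq> 0"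
    using assms unfolding form_direct_sum_def by auto
  have "U \<noteq> {0}" using h(2,4) symp_zero[of d] by auto
  moreover have "W \<noteq> {0}" using h(3,5) symp_zero[of d] by auto
  ultimately show ?thesis using h(1) by blast
qed

lemma d0_small:
  fixes f :: "('n::finite, 'k::field) mpoly"
  assumes hom: "f \<in> Sdeg 1"
  shows "pdim (grad_span f) \<le> 1"
proof -
  have "grad_span f \<subseteq> pspan {1}"
    unfolding grad_span_def
  proof (rule pv.span_minimal[OF _ pv.subspace_span], safe)
    fix i
    have "pd i f = psmult (cf f i) 1" using pd_lin[OF hom] by (simp add: psmult_conv)
    then show "pd i f \<in> pspan {1}" by (simp add: pv.span_scale pv.span_base)
  qed
  then show ?thesis using pv.dim_le_card[of "grad_span f" "{1}"] by simp
qed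

lemma sds_nontriv: "subsp_direct_sum d (L :: ('n::finite, 'k::field) mpoly set) \<Longrightarrow> \<exists>U W :: ('n, 'k) mpoly set. vdecomp U W \<and> U \<noteq> {0} \<and> W \<noteq> {0}"
  unfolding subsp_direct_sum_def by blast

lemma d0_none:
  fixes f :: "('n::finite, 'k::field) mpoly"
  assumes hom: "f \<in> Sdeg 1" and grad: "pdim (grad_span f) = card (UNIV :: 'n set)"
  shows "\<not> (\<exists>U W :: ('n, 'k) mpoly set. vdecomp U W \<and> U \<noteq> {0} \<and> W \<noteq> {0})"
proof
  assume "\<exists>U W :: ('n, 'k) mpoly set. vdecomp U W \<and> U \<noteq> {0} \<and> W \<noteq> {0}"
  then obtain U W :: "('n, 'k) mpoly set" where "vdecomp U W" "U \<noteq> {0}" "W \<noteq> {0}" by blast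
  then have "2 \<le> card (UNIV :: 'n set)" by (rule two_le_n)
  then show False using d0_small[OF hom] grad by simp
qed

lemma fds_to_bds:
  fixes f :: "('n::finite, 'k::field) mpoly"
  assumes char: "(of_nat (fact (d + 1)) :: 'k) \<noteq> 0"
    and hom: "f \<in> Sdeg (d + 1)"
    and grad: "pdim (grad_span f) = card (UNIV :: 'n set)"
    and fds: "form_direct_sum d f"
    and d1: "1 \<le> d"
  shows "subsp_balanced_direct_sum d (grad_span f)"
proof -
  obtain U W :: "('n, 'k) mpoly set" and f1 f2 :: "('n, 'k) mpoly" where h: "vdecomp U W" "f1 \<in> symp U (Suc d)" "f2 \<in> symp W (Suc d)" "f1 \<noteq> 0" "f2 \<noteq> 0"
    "f = f1 + f2"
    using fds unfolding form_direct_sum_def by auto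
  interpret vdec U W using h(1) by unfold_locales
  interpret sw: vdec W U using swap .
  have U0: "U \<noteq> {0}" using h(2,4) symp_zero[of d] by auto
  have W0: "W \<noteq> {0}" using h(3,5) symp_zero[of d] by auto
  have cd: "(of_nat d :: 'k) \<noteq> 0" using char_le[OF char d1] by simp
  define L where "L = grad_span f"
  define L1 where "L1 = pspan (range (\<lambda>i. pd i f1))"
  define L2 where "L2 = pspan (range (\<lambda>i. pd i f2))"
  have Lsub: "psubspace L" unfolding L_def grad_span_def by simp
  have pd1: "pd i f1 \<in> symp U d" for i using Dd_symp[OF U_S1 h(2), of "\<lambda>j. if j = i then 1 else 0"] by (simp add: Dd_unit)
  have pd2: "pd i f2 \<in> symp W d" for i using Dd_symp[OF W_S1 h(3), of "\<lambda>j. if j = i then 1 else 0"] by (simp add: Dd_unit)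
  have L1s: "L1 \<subseteq> symp U d" unfolding L1_def by (rule pv.span_minimal[OF _ symp_subspace]) (use pd1 in blast)
  have L2s: "L2 \<subseteq> symp W d" unfolding L2_def by (rule pv.span_minimal[OF _ symp_subspace]) (use pd2 in blast)
  have k1: "Dd (alpha W U i) f1 = 0" for i by (rule Dd_kill_symp[OF _ h(2)]) (rule sw.alpha_kill)
  have k2: "Dd (alpha U W i) f2 = 0" for i by (rule Dd_kill_symp[OF _ h(3)]) (rule alpha_kill)
  have e1: "pd i f1 = Dd (alpha U W i) f" for i using pd_split[of i f1] k1 k2 by (simp add: h(6) Dd_add)
  have e2: "pd i f2 = Dd (alpha W U i) f" for i using sw.pd_split[of i f2] k1 k2 by (simp add: h(6) Dd_add)
  have L1L: "L1 \<subseteq> L" unfolding L1_def L_def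
    by (rule pv.span_minimal[OF _ Lsub[unfolded L_def]]) (auto simp: e1 Dd_in_span)
  have L2L: "L2 \<subseteq> L" unfolding L2_def L_def
    by (rule pv.span_minimal[OF _ Lsub[unfolded L_def]]) (auto simp: e2 Dd_in_span)
  have L1sub: "psubspace L1" and L2sub: "psubspace L2" unfolding L1_def L2_def by simp_all
  have sss: "psubspace (setsum L1 L2)" unfolding setsum_def by (rule pv.subspace_sums[OF L1sub L2sub])
  have "L \<subseteq> setsum L1 L2"
    unfolding L_def grad_span_def
  proof (rule pv.span_minimal[OF _ sss], safe)
    fix i
    have "pd i f = pd i f1 + pd i f2" by (simp add: h(6) pd_add)
    moreover have "pd i f1 \<in> L1" "pd i f2 \<in> L2" unfolding L1_def L2_def by (auto intro: pv.span_base)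
    ultimately show "pd i f \<in> setsum L1 L2" unfolding setsum_def by blast
  qed
  moreover have "setsum L1 L2 \<subseteq> L"
    unfolding setsum_def using L1L L2L pv.subspace_add[OF Lsub] by blast
  ultimately have Leq: "L = setsum L1 L2" by blast
  have int: "L1 \<inter> L2 = {0}"
  proof
    show "L1 \<inter> L2 \<subseteq> {0}" using L1s L2s symp_inter[OF cd] by blast
    show "{0} \<subseteq> L1 \<inter> L2" using pv.subspace_0[OF L1sub] pv.subspace_0[OF L2sub] by blast
  qed
  have fin1: "pfin L1" unfolding L1_def by (intro pfin_span) simp
  have fin2: "pfin L2" unfolding L2_def by (intro pfin_span) simp
  have dsum: "pdim L = pdim L1 + pdim L2"
    unfolding Leq by (rule dim_direct_sum[OF L1sub fin1 L2sub fin2 int])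
  have b1: "pdim L1 \<le> pdim U" unfolding L1_def by (rule rank_bound[OF U_sub U_S1 h(2)])
  have b2: "pdim L2 \<le> pdim W" unfolding L2_def by (rule rank_bound[OF W_sub W_S1 h(3)])
  have nUW: "pdim U + pdim W = card (UNIV :: 'n set)" by (rule two_le_n(2)[OF h(1) U0 W0])
  have "pdim L1 = pdim U" "pdim L2 = pdim W" using dsum b1 b2 nUW grad unfolding L_def by linarith+
  then show ?thesis
    unfolding subsp_balanced_direct_sum_def
    using h(1) U0 W0 L1sub L2sub L1s L2s dsum[symmetric] Leq unfolding L_def by blast
qed


lemma Dd_minus_unit: "Dd (\<lambda>j. c j + - (if j = i then 1 else 0)) p = Dd c p - pd i p"
proof -
  have e: "(\<lambda>j. c j + - (if j = i then 1 else 0)) = (\<lambda>j. c j + (- 1) * (if j = i then 1 else 0))"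
    by simp
  show ?thesis unfolding e Dd_plus_dir Dd_scale_dir Dd_unit by (simp add: pv.scale_minus_left)
qed

context vdec
begin

lemma killer_in:
  assumes cd1: "(of_nat (d - 1) :: 'k) \<noteq> 0" and cd: "(of_nat d :: 'k) \<noteq> 0" and d2: "2 \<le> d"
    and Lsub: "grad_span f \<subseteq> setsum (symp U d) (symp W d)"
    and c: "\<And>w. w \<in> W \<Longrightarrow> Dd c w = 0"
  shows "Dd c f \<in> symp U d"
proof -
  interpret sw: vdec W U using swap .
  have dec: "\<exists>a b. p = a + b \<and> a \<in> symp U d \<and> b \<in> symp W d" if "p \<in> grad_span f" for p
    using Lsub that unfolding setsum_def by blast
  obtain a b where ab: "Dd c f = a + b" "a \<in> symp U d" "b \<in> symp W d" using dec[OF Dd_in_span] by blast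
  have dS: "d = Suc (d - 1)" using d2 by simp
  have "pd j b = 0" for j
  proof -
    have z1: "Dd (alpha U W j) b = 0" by (rule Dd_kill_symp[OF _ ab(3)]) (rule alpha_kill)
    let ?b = "alpha W U j"
    obtain a' b' where ab': "Dd ?b f = a' + b'" "a' \<in> symp U d" "b' \<in> symp W d" using dec[OF Dd_in_span] by blast
    have "Dd ?b a = 0" by (rule Dd_kill_symp[OF _ ab(2)]) (rule sw.alpha_kill)
    then have "Dd ?b (Dd c f) = Dd ?b b" by (simp add: ab(1) Dd_add)
    moreover have "Dd c b' = 0" by (rule Dd_kill_symp[OF c ab'(3)])
    then have "Dd c (Dd ?b f) = Dd c a'" by (simp add: ab'(1) Dd_add)
    ultimately have eq: "Dd ?b b = Dd c a'" by (simp add: Dd_comm)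
    have "Dd c a' \<in> symp U (d - 1)" using Dd_symp[OF U_S1, of a' "d - 1" c] ab'(2) dS by simp
    moreover have "Dd ?b b \<in> symp W (d - 1)" using Dd_symp[OF W_S1, of b "d - 1" ?b] ab(3) dS by simp
    ultimately have "Dd ?b b = 0" using symp_inter[OF cd1] eq by simp
    then show ?thesis using z1 pd_split[of j b] by simp
  qed
  then have "b = 0" using all_pd_zero[OF _ cd] symp_Sdeg[OF W_S1] ab(3) by blast
  then show ?thesis using ab by simp
qed

lemma not_in_symp_W:
  fixes f :: "('n, 'k) mpoly"
  assumes grad: "pdim (grad_span f) = card (UNIV :: 'n set)" and U0: "U \<noteq> {0}" and fW: "f \<in> symp W m"
  shows False
proof -
  interpret sw: vdec W U using swap .
  have k: "Dd (alpha U W i) f = 0" for i by (rule Dd_kill_symp[OF _ fW]) (rule alpha_kill)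
  have a1: "alpha W U i j = (if j = i then 1 else 0)" for i j
  proof -
    have "Dd (\<lambda>j. alpha W U i j + - (if j = i then 1 else 0)) f = 0"
      using pd_split[of i f] k by (subst Dd_minus_unit) simp
    then have "(\<Sum>j\<in>UNIV. psmult (alpha W U i j + - (if j = i then 1 else 0)) (pd j f)) = 0"
      by (simp add: Dd_def)
    then have "alpha W U i j + - (if j = i then 1 else 0) = 0" by (rule grad_indep[OF grad])
    then show ?thesis by (simp add: add_eq_0_iff)
  qed
  have a0: "alpha U W i j = 0" for i j
    using alpha_sum[of i j] a1[of i j] by (auto split: if_splits)
  have pz: "proj U W (Xv j) = 0" for j
  proof -
    have "proj U W (Xv j) = (\<Sum>i\<in>UNIV. psmult (cf (proj U W (Xv j)) i) (Xv i))"
      by (rule lin_expand) (rule subsetD[OF U_S1 proj_mem(1)[OF Xv_Sdeg]])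
    also have "\<dots> = 0" using a0 by (simp add: alpha_def)
    finally show ?thesis .
  qed
  have XW: "Xv j \<in> W" for j using proj_mem(2)[OF Xv_Sdeg, of j] pz by simp
  have "Sdeg 1 \<subseteq> W"
    using Sdeg1_span pv.span_minimal[OF _ W_sub, of "range Xv"] XW by blast
  then have "U \<subseteq> {0}" using U_S1 UW_int by blast
  then show False using U0 pv.subspace_0[OF U_sub] by blast
qed

end

lemma sds_to_fds_ge2:
  fixes f :: "('n::finite, 'k::field) mpoly"
  assumes char: "(of_nat (fact (d + 1)) :: 'k) \<noteq> 0"
    and hom: "f \<in> Sdeg (d + 1)"
    and grad: "pdim (grad_span f) = card (UNIV :: 'n set)"
    and sds: "subsp_direct_sum d (grad_span f)"
    and d2: "2 \<le> d"
  shows "form_direct_sum d f"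
proof -
  obtain U W L1 L2 :: "('n, 'k) mpoly set" where h: "vdecomp U W" "U \<noteq> {0}" "W \<noteq> {0}"
    "L1 \<subseteq> symp U d" "L2 \<subseteq> symp W d" "grad_span f = setsum L1 L2"
    using sds unfolding subsp_direct_sum_def by auto
  interpret vdec U W using h(1) by unfold_locales
  interpret sw: vdec W U using swap .
  have cd: "(of_nat d :: 'k) \<noteq> 0" by (rule char_le[OF char]) (use d2 in auto)
  have cd1: "(of_nat (d - 1) :: 'k) \<noteq> 0" by (rule char_le[OF char]) (use d2 in auto)
  have cd2: "(of_nat (d + 1) :: 'k) \<noteq> 0" by (rule char_le[OF char]) auto
  have Lsub: "grad_span f \<subseteq> setsum (symp U d) (symp W d)"
    unfolding h(6) setsum_def using h(4,5) by blast
  have Lsub': "grad_span f \<subseteq> setsum (symp W d) (symp U d)"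
    using Lsub setsum_comm by metis
  define S1 where "S1 = (\<Sum>i\<in>UNIV. proj U W (Xv i) * Dd (alpha U W i) f)"
  define S2 where "S2 = (\<Sum>i\<in>UNIV. proj W U (Xv i) * Dd (alpha W U i) f)"
  define c where "c = inverse (of_nat (d + 1) :: 'k)"
  have c0: "c \<noteq> 0" using cd2 by (simp add: c_def)
  have S1in: "S1 \<in> symp U (Suc d)"
    unfolding S1_def
  proof (rule pv.subspace_sum[OF symp_subspace])
    fix i
    have "Dd (alpha U W i) f \<in> symp U d" by (rule killer_in[OF cd1 cd d2 Lsub]) (rule alpha_kill)
    then show "proj U W (Xv i) * Dd (alpha U W i) f \<in> symp U (Suc d)"
      by (rule lin_mult_symp[OF proj_mem(1)[OF Xv_Sdeg]])
  qed
  have S2in: "S2 \<in> symp W (Suc d)"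
    unfolding S2_def
  proof (rule pv.subspace_sum[OF symp_subspace])
    fix i
    have "Dd (alpha W U i) f \<in> symp W d" by (rule sw.killer_in[OF cd1 cd d2 Lsub']) (rule sw.alpha_kill)
    then show "proj W U (Xv i) * Dd (alpha W U i) f \<in> symp W (Suc d)"
      by (rule lin_mult_symp[OF sw.proj_mem(1)[OF Xv_Sdeg]])
  qed
  have "psmult (of_nat (d + 1)) f = S1 + S2" unfolding S1_def S2_def by (rule euler_split[OF hom])
  then have "psmult c (psmult (of_nat (d + 1)) f) = psmult c (S1 + S2)" by simp
  moreover have "psmult c (psmult (of_nat (d + 1)) f) = f"
    using cd2 by (simp add: c_def pv.scale_scale del: of_nat_add)
  ultimately have feq: "f = psmult c S1 + psmult c S2"
    by (simp add: pv.scale_right_distrib)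
  have f1in: "psmult c S1 \<in> symp U (d + 1)" using pv.subspace_scale[OF symp_subspace S1in] by simp
  have f2in: "psmult c S2 \<in> symp W (d + 1)" using pv.subspace_scale[OF symp_subspace S2in] by simp
  have f1nz: "psmult c S1 \<noteq> 0"
  proof
    assume "psmult c S1 = 0"
    then have "f \<in> symp W (d + 1)" using feq f2in by (simp del: pv.scale_eq_0_iff)
    then show False by (rule not_in_symp_W[OF grad h(2)])
  qed
  have f2nz: "psmult c S2 \<noteq> 0"
  proof
    assume "psmult c S2 = 0"
    then have "f \<in> symp U (d + 1)" using feq f1in by (simp del: pv.scale_eq_0_iff)
    then show False by (rule sw.not_in_symp_W[OF grad h(3)])
  qed
  show ?thesis unfolding form_direct_sum_def
    using h(1) f1in f2in f1nz f2nz feq by blast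
qed


lemma bil_add_m: "bil v (p + q) = bil v p + bil v q"
  by (simp add: bil_def cf_add distrib_left sum.distrib)

lemma bil_psmult_m: "bil v (psmult t p) = t * bil v p"
  by (simp add: bil_def cf_psmult sum_distrib_left algebra_simps)

lemma bil_zero_m[simp]: "bil v 0 = 0"
  by (simp add: bil_def)

lemma bil_diff_m: "bil v (p - q) = bil v p - bil v q"
  using bil_add_m[of v "p - q" q] by simp

lemma bil_Xv: "bil v (Xv j) = v j"
proof -
  have "bil v (Xv j) = (\<Sum>i\<in>UNIV. if i = j then v i else 0)"
    unfolding bil_def by (rule sum.cong) (auto simp: cf_Xv)
  then show ?thesis by simp
qed

lemma psmult_two: "psmult 2 x = x + x"
  using pv.scale_left_distrib[of 1 1 x] by simp

lemma exists_nondeg: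
  fixes f :: "('n::finite, 'k::field) mpoly"
  assumes grad: "pdim (grad_span f) = card (UNIV :: 'n set)" and hom: "f \<in> Sdeg 2"
    and two: "(2 :: 'k) \<noteq> 0"
  shows "\<exists>v. Dd v (Dd v f) \<noteq> 0"
proof (rule ccontr)
  assume "\<not> (\<exists>v. Dd v (Dd v f) \<noteq> 0)"
  then have all: "Dd v (Dd v f) = 0" for v by blast
  have dii: "pd i (pd i f) = 0" for i using all[of "\<lambda>j. if j = i then 1 else 0"] by (simp add: Dd_unit)
  have dij: "pd i (pd j f) = 0" for i j
  proof -
    let ?u = "\<lambda>k. (if k = i then 1 else 0) + (if k = j then 1 else (0::'k))"
    have Du: "Dd ?u p = pd i p + pd j p" for p by (simp add: Dd_plus_dir Dd_unit)
    have "Dd ?u (Dd ?u f) = pd i (pd i f) + pd i (pd j f) + pd j (pd i f) + pd j (pd j f)"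
      by (simp add: Du pd_add add.assoc)
    then have "pd i (pd j f) + pd i (pd j f) = 0" using all[of ?u] dii by (simp add: pd_comm[of j i])
    then have "psmult 2 (pd i (pd j f)) = 0" by (simp add: psmult_two)
    then show ?thesis using two by simp
  qed
  have "pd j f = 0" for j
  proof (rule all_pd_zero[of _ 1])
    show "pd j f \<in> Sdeg 1" using Sdeg_pd[OF hom, of j] by simp
  qed (simp_all add: dij)
  then have "(\<Sum>j\<in>UNIV. psmult 1 (pd j f)) = 0" by simp
  then have "(1::'k) = 0" by (rule grad_indep[OF grad])
  then show False by simp
qed


lemma quad_vdecomp:
  fixes l :: "('n::finite, 'k::field) mpoly"
  assumes l: "l \<in> Sdeg 1" and a: "bil v l \<noteq> 0"
  shows "vdecomp (pspan {l}) {m \<in> Sdeg 1. bil v m = 0}"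
proof -
  let ?U = "pspan {l}" and ?W = "{m \<in> Sdeg 1. bil v m = 0}"
  have Wsub: "psubspace ?W"
  proof (rule pv.subspaceI)
    show "0 \<in> ?W" using pv.subspace_0[OF Sdeg_subspace[of 1]] by simp
    show "x + y \<in> ?W" if "x \<in> ?W" "y \<in> ?W" for x y
    proof -
      have "x \<in> Sdeg 1" "y \<in> Sdeg 1" using that by auto
      then have "x + y \<in> Sdeg 1" by (rule pv.subspace_add[OF Sdeg_subspace])
      then show ?thesis using that by (simp add: bil_add_m)
    qed
    show "psmult c x \<in> ?W" if "x \<in> ?W" for c x
    proof -
      have "x \<in> Sdeg 1" using that by auto
      then have "psmult c x \<in> Sdeg 1" by (rule pv.subspace_scale[OF Sdeg_subspace])
      then show ?thesis using that by (simp add: bil_psmult_m)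
    qed
  qed
  have US: "?U \<subseteq> Sdeg 1" using l by (intro pv.span_minimal[OF _ Sdeg_subspace]) simp
  have int: "?U \<inter> ?W = {0}"
  proof
    show "?U \<inter> ?W \<subseteq> {0}"
    proof
      fix x assume x: "x \<in> ?U \<inter> ?W"
      then obtain t where t: "x = psmult t l" using pv.span_singleton by blast
      then have "t * bil v l = 0" using x by (simp add: bil_psmult_m)
      then show "x \<in> {0}" using a t by simp
    qed
    show "{0} \<subseteq> ?U \<inter> ?W" using pv.subspace_0[OF Wsub] pv.span_zero by blast
  qed
  have sum: "setsum ?U ?W = Sdeg 1"
  proof
    show "setsum ?U ?W \<subseteq> Sdeg 1"
      unfolding setsum_def using US pv.subspace_add[OF Sdeg_subspace[of 1]] by blast
    show "Sdeg 1 \<subseteq> setsum ?U ?W"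
    proof
      fix m :: "('n, 'k) mpoly" assume m: "m \<in> Sdeg 1"
      let ?t = "bil v m / bil v l"
      have 1: "psmult ?t l \<in> ?U" by (simp add: pv.span_scale pv.span_base)
      have "m - psmult ?t l \<in> Sdeg 1"
        using m l pv.subspace_diff[OF Sdeg_subspace[of 1]] pv.subspace_scale[OF Sdeg_subspace[of 1]] by blast
      moreover have "bil v (m - psmult ?t l) = 0" using a by (simp add: bil_diff_m bil_psmult_m)
      ultimately have 2: "m - psmult ?t l \<in> ?W" by simp
      have "m = psmult ?t l + (m - psmult ?t l)" by simp
      then show "m \<in> setsum ?U ?W" unfolding setsum_def using 1 2 by blast
    qed
  qed
  show ?thesis unfolding vdecomp_def using Wsub US int sum by simp
qed

lemma quad_alpha:
  fixes l :: "('n::finite, 'k::field) mpoly"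
  assumes l: "l \<in> Sdeg 1" and a: "bil v l \<noteq> 0"
  shows "alpha (pspan {l}) {m \<in> Sdeg 1. bil v m = 0} i = (\<lambda>j. (cf l i / bil v l) * v j)"
proof
  fix j
  interpret vdec "pspan {l}" "{m \<in> Sdeg 1. bil v m = 0}" using quad_vdecomp[OF l a] by unfold_locales
  let ?t = "v j / bil v l"
  have 1: "psmult ?t l \<in> pspan {l}" by (simp add: pv.span_scale pv.span_base)
  have "Xv j - psmult ?t l \<in> Sdeg 1"
    using Xv_Sdeg l pv.subspace_diff[OF Sdeg_subspace[of 1]] pv.subspace_scale[OF Sdeg_subspace[of 1]] by blast
  moreover have "bil v (Xv j - psmult ?t l) = 0" using a by (simp add: bil_diff_m bil_psmult_m bil_Xv)
  ultimately have 2: "Xv j - psmult ?t l \<in> {m \<in> Sdeg 1. bil v m = 0}" by simp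
  have "proj (pspan {l}) {m \<in> Sdeg 1. bil v m = 0} (Xv j) = psmult ?t l"
    using proj_eq[OF 1 2] by simp
  then show "alpha (pspan {l}) {m \<in> Sdeg 1. bil v m = 0} i j = cf l i / bil v l * v j"
    by (simp add: alpha_def cf_psmult)
qed

lemma quad_ker:
  fixes l :: "('n::finite, 'k::field) mpoly"
  assumes l: "l \<in> Sdeg 1" and a: "bil v l \<noteq> 0"
  shows "(\<And>k. 1 \<le> k \<Longrightarrow> k \<le> m \<Longrightarrow> (of_nat k :: 'k) \<noteq> 0) \<Longrightarrow> g \<in> Sdeg m \<Longrightarrow> Dd v g = 0 \<Longrightarrow>
    g \<in> symp {m \<in> Sdeg 1. bil v m = 0} m"
proof (induction m arbitrary: g)
  case 0
  have "g = psmult (Poly_Mapping.lookup g 0) 1" using Sdeg0_const[OF 0(2)] by (simp add: psmult_conv)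
  moreover have "1 \<in> symp {m \<in> Sdeg 1. bil v m = 0} 0" using symp_gen[of "[]" 0] by simp
  ultimately show ?case using pv.subspace_scale[OF symp_subspace] by metis
next
  case (Suc m)
  let ?U = "pspan {l}" and ?W = "{m \<in> Sdeg 1. bil v m = 0}"
  interpret vdec ?U ?W using quad_vdecomp[OF l a] by unfold_locales
  interpret sw: vdec ?W ?U using swap .
  have z: "Dd (alpha ?U ?W i) g = 0" for i
    using Suc.prems(3) unfolding quad_alpha[OF l a] Dd_scale_dir by simp
  have "psmult (of_nat (Suc m)) g = (\<Sum>i\<in>UNIV. proj ?W ?U (Xv i) * Dd (alpha ?W ?U i) g)"
    using euler_split[OF Suc.prems(2)] z by simp
  moreover have "(\<Sum>i\<in>UNIV. proj ?W ?U (Xv i) * Dd (alpha ?W ?U i) g) \<in> symp ?W (Suc m)"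
  proof (rule pv.subspace_sum[OF symp_subspace])
    fix i
    have "Dd (alpha ?W ?U i) g \<in> Sdeg m" using Dd_Sdeg[OF Suc.prems(2)] by simp
    moreover have "Dd v (Dd (alpha ?W ?U i) g) = 0" using Suc.prems(3) by (simp add: Dd_comm[of v])
    ultimately have "Dd (alpha ?W ?U i) g \<in> symp ?W m" using Suc.IH Suc.prems(1) by simp
    then show "proj ?W ?U (Xv i) * Dd (alpha ?W ?U i) g \<in> symp ?W (Suc m)"
      by (rule lin_mult_symp[OF sw.proj_mem(1)[OF Xv_Sdeg]])
  qed
  ultimately have "psmult (of_nat (Suc m)) g \<in> symp ?W (Suc m)" by simp
  then have "psmult (inverse (of_nat (Suc m))) (psmult (of_nat (Suc m)) g) \<in> symp ?W (Suc m)"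
    by (rule pv.subspace_scale[OF symp_subspace])
  moreover have "(of_nat (Suc m) :: 'k) \<noteq> 0" using Suc.prems(1)[of "Suc m"] by simp
  ultimately show ?case by (simp add: pv.scale_scale del: of_nat_Suc)
qed


lemma sds_to_fds_1:
  fixes f :: "('n::finite, 'k::field) mpoly"
  assumes two: "(2 :: 'k) \<noteq> 0" and hom: "f \<in> Sdeg 2"
    and grad: "pdim (grad_span f) = card (UNIV :: 'n set)" and n2: "2 \<le> card (UNIV :: 'n set)"
  shows "form_direct_sum 1 f"
proof -
  obtain v where v: "Dd v (Dd v f) \<noteq> 0" using exists_nondeg[OF grad hom two] by blast
  define l where "l = Dd v f"
  have lS: "l \<in> Sdeg 1" unfolding l_def using Dd_Sdeg[OF hom, of v] by simp
  define a where "a = bil v l"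
  have Dl: "Dd v l = Poly_Mapping.single 0 a" unfolding a_def by (rule Dd_lin[OF lS])
  have a0: "a \<noteq> 0" using v Dl unfolding l_def by auto
  have a0': "bil v l \<noteq> 0" using a0 by (simp add: a_def)
  let ?U = "pspan {l}" and ?W = "{m \<in> Sdeg 1. bil v m = 0}"
  have vd: "vdecomp ?U ?W" by (rule quad_vdecomp[OF lS a0'])
  have two_a: "2 * a \<noteq> 0" using two a0 by simp
  define f1 where "f1 = psmult (inverse (2 * a)) (l * l)"
  define f2 where "f2 = f - f1"
  have Dll: "Dd v (l * l) = psmult (2 * a) l"
  proof -
    have "Dd v (l * l) = psmult a l + psmult a l"
      by (simp add: Dd_mult Dl psmult_conv mult.commute)
    also have "\<dots> = psmult (2 * a) l" by (simp only: mult_2 pv.scale_left_distrib)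
    finally show ?thesis .
  qed
  have Df1: "Dd v f1 = l" unfolding f1_def using two_a by (simp add: Dd_psmult Dll pv.scale_scale)
  have f2S: "f2 \<in> Sdeg 2"
  proof -
    have ll: "l * l \<in> Sdeg 2" using Sdeg_mult[OF lS lS] by (simp add: numeral_2_eq_2)
    have "f1 \<in> Sdeg 2" unfolding f1_def by (rule pv.subspace_scale[OF Sdeg_subspace ll])
    then show ?thesis unfolding f2_def using pv.subspace_diff[OF Sdeg_subspace hom] by blast
  qed
  have Df2: "Dd v f2 = 0" unfolding f2_def by (simp add: Dd_diff Df1 l_def)
  have f2in: "f2 \<in> symp ?W 2"
  proof (rule quad_ker[OF lS a0' _ f2S Df2])
    fix k :: nat assume "1 \<le> k" "k \<le> 2"
    then have "k = 1 \<or> k = 2" by auto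
    then show "(of_nat k :: 'k) \<noteq> 0" using two by auto
  qed
  have f1in: "f1 \<in> symp ?U 2"
  proof -
    have "prod_list [l, l] \<in> symp ?U 2" by (rule symp_gen) (auto intro: pv.span_base)
    then show ?thesis unfolding f1_def using pv.subspace_scale[OF symp_subspace] by simp
  qed
  have l0: "l \<noteq> 0" using a0 by (auto simp: a_def)
  have f1nz: "f1 \<noteq> 0" using Df1 l0 by auto
  have f2nz: "f2 \<noteq> 0"
  proof
    assume "f2 = 0"
    then have ff: "f = f1" by (simp add: f2_def)
    have "grad_span f \<subseteq> pspan {l}"
      unfolding grad_span_def
    proof (rule pv.span_minimal[OF _ pv.subspace_span], safe)
      fix i
      have "pd i (l * l) = psmult (cf l i) l + psmult (cf l i) l"
        by (simp add: pd_mult pd_lin[OF lS] psmult_conv mult.commute)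
      then have eq: "pd i f = psmult (inverse (2 * a)) (psmult (cf l i) l + psmult (cf l i) l)"
        by (simp add: ff f1_def pd_psmult)
      have "psmult (inverse (2 * a)) (psmult (cf l i) l + psmult (cf l i) l) \<in> pspan {l}"
        by (intro pv.span_scale pv.span_add pv.span_base) simp_all
      then show "pd i f \<in> pspan {l}" unfolding eq .
    qed
    then have "pdim (grad_span f) \<le> card {l}" by (rule pv.dim_le_card) simp
    then show False using grad n2 by simp
  qed
  have "f = f1 + f2" by (simp add: f2_def)
  then show ?thesis unfolding form_direct_sum_def one_add_one
    using vd f1in f2in f1nz f2nz by blast
qed

theorem lemma2p2:
  fixes f :: "('n::finite, 'k::field) mpoly" and d :: nat
  assumes char: "(of_nat (fact (d + 1)) :: 'k) \<noteq> 0"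
    and hom: "f \<in> Sdeg (d + 1)"
    and grad: "pdim (grad_span f) = card (UNIV :: 'n set)"
  shows "(form_direct_sum d f \<longleftrightarrow> subsp_direct_sum d (grad_span f)) \<and>
         (subsp_direct_sum d (grad_span f) \<longleftrightarrow> subsp_balanced_direct_sum d (grad_span f))"
proof -
  have b2s: "subsp_balanced_direct_sum d (grad_span f) \<Longrightarrow> subsp_direct_sum d (grad_span f)"
    unfolding subsp_balanced_direct_sum_def subsp_direct_sum_def by blast
  show ?thesis
  proof (cases "d = 0")
    case True
    then have hom1: "f \<in> Sdeg 1" using hom by simp
    have "\<not> form_direct_sum d f" using fds_nontriv d0_none[OF hom1 grad] by blast
    moreover have "\<not> subsp_direct_sum d (grad_span f)" using sds_nontriv d0_none[OF hom1 grad] by blast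
    ultimately show ?thesis using b2s by blast
  next
    case False
    then have d1: "1 \<le> d" by simp
    have f2b: "form_direct_sum d f \<Longrightarrow> subsp_balanced_direct_sum d (grad_span f)"
      by (rule fds_to_bds[OF char hom grad _ d1])
    have s2f: "form_direct_sum d f" if sds: "subsp_direct_sum d (grad_span f)"
    proof (cases "d = 1")
      case True
      obtain U W :: "('n, 'k) mpoly set" where "vdecomp U W" "U \<noteq> {0}" "W \<noteq> {0}"
        using sds_nontriv[OF sds] by blast
      then have n2: "2 \<le> card (UNIV :: 'n set)" by (rule two_le_n)
      have two: "(2 :: 'k) \<noteq> 0" using char True by simp
      have hom2: "f \<in> Sdeg 2" using hom True by (simp add: numeral_2_eq_2)
      have "form_direct_sum 1 f" by (rule sds_to_fds_1[OF two hom2 grad n2])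
      then show ?thesis using True by simp
    next
      case False
      then have "2 \<le> d" using d1 by simp
      then show ?thesis by (rule sds_to_fds_ge2[OF char hom grad sds])
    qed
    show ?thesis using f2b s2f b2s by blast
  qed
qed


end
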